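(* Let $(X,d)$ be a compact metric space and $f:X\to X$ continuous. Then $$h_{top}(f)=\lim_{\varepsilon\to0}\liminf_{n\to\infty}\frac{\log\log N_{\mathcal M}(n,\varepsilon)}{n}=\lim_{\varepsilon\to0}\liminf_{n\to\infty}\frac{\log\log N_{\mathcal K}(n,\varepsilon)}{n}.$$
   Context: $d_n(x,y)=\max_{0\le i\le n-1}d(f^ix,f^iy)$. $\mathcal M(X)$ is the set of Borel probability measures on $X$, $W_1^n(\mu,\nu)=\inf_\pi\int d_n\,d\pi$ over Borel probability measures on $X\times X$ with marginals $\mu,\nu$; $N_{\mathcal M}(n,\varepsilon)$ is the smallest cardinality of $E\subset\mathcal M(X)$ such that every $\mu\in\mathcal M(X)$ is within $W_1^n$-distance $\le\varepsilon$ of some element of $E$. $\mathcal K(X)$ is the space of nonempty closed subsets of $X$; $A^\varepsilon_n=\{x:d_n(x,A)<\varepsilon\}$, $H^n(B,C)=\inf\{\varepsilon>0:B\subset C^\varepsilon_n,C\subset B^\varepsilon_n\}$; $N_{\mathcal K}(n,\varepsilon)$ is the smallest cardinality of $\mathcal G\subset\mathcal K(X)$ such that every $B\in\mathcal K(X)$ is within $H^n$-distance $\le\varepsilon$ of some element of $\mathcal G$. Convention $\log0=0$. *)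

theory Defs
  imports "HOL-Analysis.Analysis" "HOL-Probability.Probability"
begin

text \<open>The compact metric space X is the (compact) universe of a metric_space type 'a.\<close>

definition dn :: "('a::metric_space \<Rightarrow> 'a) \<Rightarrow> nat \<Rightarrow> 'a \<Rightarrow> 'a \<Rightarrow> real" where
  "dn f n x y = Max {dist ((f ^^ i) x) ((f ^^ i) y) | i. i < n}"

definition probs :: "'a::metric_space measure set" where
  "probs = {\<mu>. prob_space \<mu> \<and> sets \<mu> = sets (borel :: 'a measure)}"

definition couplings :: "'a::metric_space measure \<Rightarrow> 'a measure \<Rightarrow> ('a \<times> 'a) measure set" where
  "couplings \<mu> \<nu> = {\<pi>. prob_space \<pi> \<and> sets \<pi> = sets (borel :: ('a \<times> 'a) measure)
      \<and> distr \<pi> borel fst = \<mu> \<and> distr \<pi> borel snd = \<nu>}"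

definition W1n :: "('a::metric_space \<Rightarrow> 'a) \<Rightarrow> nat \<Rightarrow> 'a measure \<Rightarrow> 'a measure \<Rightarrow> real" where
  "W1n f n \<mu> \<nu> = Inf {integral\<^sup>L \<pi> (\<lambda>p. dn f n (fst p) (snd p)) | \<pi>. \<pi> \<in> couplings \<mu> \<nu>}"

definition NM :: "('a::metric_space \<Rightarrow> 'a) \<Rightarrow> nat \<Rightarrow> real \<Rightarrow> nat" where
  "NM f n \<epsilon> = Inf {card E | E. finite E \<and> E \<subseteq> probs \<and>
       (\<forall>\<mu>\<in>probs. \<exists>\<nu>\<in>E. W1n f n \<mu> \<nu> \<le> \<epsilon>)}"

definition KX :: "'a::metric_space set set" where
  "KX = {A. A \<noteq> {} \<and> closed A}"

definition dn_set :: "('a::metric_space \<Rightarrow> 'a) \<Rightarrow> nat \<Rightarrow> 'a \<Rightarrow> 'a set \<Rightarrow> real" where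
  "dn_set f n x A = Inf {dn f n x a | a. a \<in> A}"

definition nbhd :: "('a::metric_space \<Rightarrow> 'a) \<Rightarrow> nat \<Rightarrow> real \<Rightarrow> 'a set \<Rightarrow> 'a set" where
  "nbhd f n \<epsilon> A = {x. dn_set f n x A < \<epsilon>}"

definition Hn :: "('a::metric_space \<Rightarrow> 'a) \<Rightarrow> nat \<Rightarrow> 'a set \<Rightarrow> 'a set \<Rightarrow> real" where
  "Hn f n B C = Inf {\<epsilon>. \<epsilon> > 0 \<and> B \<subseteq> nbhd f n \<epsilon> C \<and> C \<subseteq> nbhd f n \<epsilon> B}"

definition NK :: "('a::metric_space \<Rightarrow> 'a) \<Rightarrow> nat \<Rightarrow> real \<Rightarrow> nat" where
  "NK f n \<epsilon> = Inf {card G | G. finite G \<and> G \<subseteq> KX \<and>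
       (\<forall>B\<in>KX. \<exists>C\<in>G. Hn f n B C \<le> \<epsilon>)}"

definition span_num :: "('a::metric_space \<Rightarrow> 'a) \<Rightarrow> nat \<Rightarrow> real \<Rightarrow> nat" where
  "span_num f n \<epsilon> = Inf {card E | E. finite E \<and> (\<forall>x. \<exists>y\<in>E. dn f n x y \<le> \<epsilon>)}"

definition h_top :: "('a::metric_space \<Rightarrow> 'a) \<Rightarrow> ereal" where
  "h_top f = Lim (at_right 0)
     (\<lambda>\<epsilon>::real. limsup (\<lambda>n. ereal (ln (real (span_num f n \<epsilon>)) / real n)))"

end

theory Submission
  imports Defs "HOL-Real_Asymp.Real_Asymp"
begin


lemma dn_eq: "dn f n x y = Max ((\<lambda>i. dist ((f ^^ i) x) ((f ^^ i) y)) ` {..<n})"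
proof -
  have "{dist ((f ^^ i) x) ((f ^^ i) y) | i. i < n} = (\<lambda>i. dist ((f ^^ i) x) ((f ^^ i) y)) ` {..<n}"
    by auto
  then show ?thesis unfolding dn_def by simp
qed

lemma dn_ge: "i < n \<Longrightarrow> dist ((f ^^ i) x) ((f ^^ i) y) \<le> dn f n x y"
  unfolding dn_eq by (rule Max_ge) auto

lemma dn_le_iff: "0 < n \<Longrightarrow> dn f n x y \<le> c \<longleftrightarrow> (\<forall>i<n. dist ((f ^^ i) x) ((f ^^ i) y) \<le> c)"
  unfolding dn_eq by (subst Max_le_iff) auto

lemma dn_less_iff: "0 < n \<Longrightarrow> dn f n x y < c \<longleftrightarrow> (\<forall>i<n. dist ((f ^^ i) x) ((f ^^ i) y) < c)"
  unfolding dn_eq by (subst Max_less_iff) auto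

lemma dn_nonneg: "0 < n \<Longrightarrow> 0 \<le> dn f n x y"
  using dn_ge[of 0 n f x y] by simp (meson order_trans zero_le_dist)

lemma dn_refl[simp]: "0 < n \<Longrightarrow> dn f n x x = 0"
  using dn_le_iff[of n f x x 0] dn_nonneg[of n f x x] by auto

lemma dn_sym: "dn f n x y = dn f n y x"
  unfolding dn_eq by (simp add: dist_commute)

lemma dn_triangle: "0 < n \<Longrightarrow> dn f n x z \<le> dn f n x y + dn f n y z"
  unfolding dn_le_iff
proof (intro allI impI)
  fix i assume "0 < n" "i < n"
  have "dist ((f ^^ i) x) ((f ^^ i) z) \<le> dist ((f ^^ i) x) ((f ^^ i) y) + dist ((f ^^ i) y) ((f ^^ i) z)"
    by (rule dist_triangle)
  also have "\<dots> \<le> dn f n x y + dn f n y z"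
    using dn_ge[OF \<open>i<n\<close>] by (intro add_mono) auto
  finally show "dist ((f ^^ i) x) ((f ^^ i) z) \<le> dn f n x y + dn f n y z" .
qed

lemma dn_eqI:
  assumes "\<And>c. a \<le> c \<longleftrightarrow> b \<le> (c::real)" shows "a = b"
  using assms[of a] assms[of b] by auto

lemma dn_add:
  assumes "0 < n" "0 < m"
  shows "dn f (n + m) x y = max (dn f n x y) (dn f m ((f ^^ n) x) ((f ^^ n) y))"
proof (rule dn_eqI)
  fix c
  have "dn f (n + m) x y \<le> c \<longleftrightarrow> (\<forall>i<n+m. dist ((f ^^ i) x) ((f ^^ i) y) \<le> c)"
    using assms by (intro dn_le_iff) auto
  also have "\<dots> \<longleftrightarrow> (\<forall>i<n. dist ((f ^^ i) x) ((f ^^ i) y) \<le> c) \<and>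
      (\<forall>j<m. dist ((f ^^ j) ((f ^^ n) x)) ((f ^^ j) ((f ^^ n) y)) \<le> c)"
  proof
    assume H: "\<forall>i<n+m. dist ((f ^^ i) x) ((f ^^ i) y) \<le> c"
    show "(\<forall>i<n. dist ((f ^^ i) x) ((f ^^ i) y) \<le> c) \<and>
      (\<forall>j<m. dist ((f ^^ j) ((f ^^ n) x)) ((f ^^ j) ((f ^^ n) y)) \<le> c)"
    proof safe
      fix j assume "j < m"
      then show "dist ((f ^^ j) ((f ^^ n) x)) ((f ^^ j) ((f ^^ n) y)) \<le> c"
        using H[rule_format, of "j + n"] by (simp add: funpow_add)
    qed (use H in auto)
  next
    assume H: "(\<forall>i<n. dist ((f ^^ i) x) ((f ^^ i) y) \<le> c) \<and>
      (\<forall>j<m. dist ((f ^^ j) ((f ^^ n) x)) ((f ^^ j) ((f ^^ n) y)) \<le> c)"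
    show "\<forall>i<n+m. dist ((f ^^ i) x) ((f ^^ i) y) \<le> c"
    proof safe
      fix i assume "i < n + m"
      show "dist ((f ^^ i) x) ((f ^^ i) y) \<le> c"
      proof (cases "i < n")
        case True then show ?thesis using H by auto
      next
        case False
        then obtain j where "i = j + n" "j < m" using \<open>i < n+m\<close>
          by (metis add.commute le_Suc_ex less_diff_conv2 not_less add_diff_cancel_left')
        then show ?thesis using H by (simp add: funpow_add)
      qed
    qed
  qed
  also have "\<dots> \<longleftrightarrow> max (dn f n x y) (dn f m ((f ^^ n) x) ((f ^^ n) y)) \<le> c"
    using assms by (simp add: dn_le_iff)
  finally show "dn f (n + m) x y \<le> c \<longleftrightarrow> max (dn f n x y) (dn f m ((f ^^ n) x) ((f ^^ n) y)) \<le> c" .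
qed

locale cds =
  fixes f :: "'a::metric_space \<Rightarrow> 'a"
  assumes cpt: "compact (UNIV :: 'a set)"
    and cont: "continuous_on UNIV f"
begin

lemma cont_funpow: "continuous_on UNIV (f ^^ i)"
proof (induction i)
  case 0 then show ?case by (simp add: continuous_on_id)
next
  case (Suc i)
  have "continuous_on UNIV (f \<circ> (f ^^ i))"
    by (rule continuous_on_compose[OF Suc]) (use cont continuous_on_subset in blast)
  then show ?case by (simp add: comp_def)
qed

lemma cont_dn_pair: "continuous_on UNIV (\<lambda>p. dn f n (fst p) (snd p))"
proof (cases n)
  case 0 then show ?thesis by (simp add: dn_eq)
next
  case (Suc k)
  have gi: "continuous_on UNIV (\<lambda>p. dist ((f ^^ i) (fst p)) ((f ^^ i) (snd p)))" for i
    by (intro continuous_on_dist continuous_on_compose2[OF cont_funpow] continuous_on_fst continuous_on_snd continuous_on_id) auto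
  have "continuous_on UNIV (\<lambda>p. Max ((\<lambda>i. dist ((f ^^ i) (fst p)) ((f ^^ i) (snd p))) ` {..<Suc k}))"
  proof (induction k)
    case 0 then show ?case using gi[of 0] by (simp add: lessThan_Suc)
  next
    case (Suc k)
    have eq: "(\<lambda>p. Max ((\<lambda>i. dist ((f ^^ i) (fst p)) ((f ^^ i) (snd p))) ` {..<Suc (Suc k)}))
       = (\<lambda>p. max (dist ((f ^^ Suc k) (fst p)) ((f ^^ Suc k) (snd p)))
            (Max ((\<lambda>i. dist ((f ^^ i) (fst p)) ((f ^^ i) (snd p))) ` {..<Suc k})))"
      by (simp add: lessThan_Suc image_insert del: funpow.simps)
    show ?case unfolding eq by (intro continuous_on_max gi Suc)
  qed
  then show ?thesis using Suc by (simp add: dn_eq)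
qed

lemma cont_dn1: "continuous_on UNIV (\<lambda>x. dn f n x y)"
proof -
  have "continuous_on UNIV ((\<lambda>p. dn f n (fst p) (snd p)) \<circ> (\<lambda>x. (x, y)))"
    by (intro continuous_on_compose continuous_intros) (use cont_dn_pair continuous_on_subset in blast)
  then show ?thesis by (simp add: comp_def)
qed

lemma cont_dn2: "continuous_on UNIV (\<lambda>y. dn f n x y)"
  using cont_dn1[of n x] by (simp add: dn_sym)

definition D :: real where "D = diameter (UNIV :: 'a set)"

lemma dn_le_D: "0 < n \<Longrightarrow> dn f n x y \<le> D"
  unfolding dn_le_iff D_def
  using compact_imp_bounded[OF cpt] by (auto intro: diameter_bounded_bound)

lemma D_nonneg: "0 \<le> D"
  using dn_le_D[of 1 undefined undefined] by simp

end

context cds begin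

definition spanning :: "nat \<Rightarrow> real \<Rightarrow> 'a set \<Rightarrow> bool" where
  "spanning n \<epsilon> E \<longleftrightarrow> finite E \<and> (\<forall>x. \<exists>y\<in>E. dn f n x y \<le> \<epsilon>)"

lemma span_num_alt: "span_num f n \<epsilon> = Inf {card E | E. spanning n \<epsilon> E}"
  unfolding span_num_def spanning_def by simp

lemma span_exists:
  assumes "0 < n" "0 < \<epsilon>" shows "\<exists>E. spanning n \<epsilon> E"
proof -
  have op: "open {x. dn f n x y < \<epsilon>}" for y
    by (rule open_Collect_less[OF cont_dn1 continuous_on_const])
  have cov: "UNIV \<subseteq> \<Union> ((\<lambda>y. {x. dn f n x y < \<epsilon>}) ` UNIV)"
    using assms by auto
  obtain C where "finite C" "UNIV \<subseteq> \<Union> ((\<lambda>y. {x. dn f n x y < \<epsilon>}) ` C)"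
    by (rule compactE_image[OF cpt, of UNIV "\<lambda>y. {x. dn f n x y < \<epsilon>}", OF op cov]) blast
  then show ?thesis unfolding spanning_def by (intro exI[of _ C]) (auto intro: less_imp_le)
qed

lemma span_obtain:
  assumes "0 < n" "0 < \<epsilon>" obtains E where "spanning n \<epsilon> E" "card E = span_num f n \<epsilon>"
proof -
  have "{card E | E. spanning n \<epsilon> E} \<noteq> {}" using span_exists[OF assms] by auto
  from Inf_nat_def1[OF this] show ?thesis using that unfolding span_num_alt by auto
qed

lemma span_le: "spanning n \<epsilon> E \<Longrightarrow> span_num f n \<epsilon> \<le> card E"
  unfolding span_num_alt by (rule cInf_lower) auto

lemma spanning_nonempty: "spanning n \<epsilon> E \<Longrightarrow> E \<noteq> {}"
  unfolding spanning_def by auto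

lemma span_pos: assumes "0 < n" "0 < \<epsilon>" shows "1 \<le> span_num f n \<epsilon>"
proof -
  obtain E where "spanning n \<epsilon> E" "card E = span_num f n \<epsilon>" using span_obtain[OF assms] .
  then show ?thesis using spanning_nonempty[of n \<epsilon> E] unfolding spanning_def
    by (metis One_nat_def Suc_leI card_gt_0_iff)
qed

lemma spanning_mono: "spanning n \<epsilon> E \<Longrightarrow> \<epsilon> \<le> \<epsilon>' \<Longrightarrow> spanning n \<epsilon>' E"
  unfolding spanning_def by (meson order_trans)

lemma span_anti: assumes "0 < n" "0 < \<epsilon>" "\<epsilon> \<le> \<epsilon>'"
  shows "span_num f n \<epsilon>' \<le> span_num f n \<epsilon>"
proof -
  obtain E where "spanning n \<epsilon> E" "card E = span_num f n \<epsilon>" using span_obtain[OF assms(1,2)] .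
  then show ?thesis using span_le spanning_mono assms(3) by metis
qed

definition covering :: "nat \<Rightarrow> real \<Rightarrow> 'a set set \<Rightarrow> bool" where
  "covering n \<epsilon> A \<longleftrightarrow> finite A \<and> \<Union>A = UNIV \<and> (\<forall>B\<in>A. \<forall>x\<in>B. \<forall>y\<in>B. dn f n x y \<le> \<epsilon>)"

definition cov :: "nat \<Rightarrow> real \<Rightarrow> nat" where
  "cov n \<epsilon> = Inf {card A | A. covering n \<epsilon> A}"

lemma cov_le: "covering n \<epsilon> A \<Longrightarrow> cov n \<epsilon> \<le> card A"
  unfolding cov_def by (rule cInf_lower) auto

lemma covering_from_spanning:
  assumes "0 < n" "spanning n \<epsilon> E"
  shows "covering n (2*\<epsilon>) ((\<lambda>y. {x. dn f n x y \<le> \<epsilon>}) ` E)"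
  unfolding covering_def
proof (intro conjI ballI)
  show "finite ((\<lambda>y. {x. dn f n x y \<le> \<epsilon>}) ` E)" using assms unfolding spanning_def by auto
  show "\<Union> ((\<lambda>y. {x. dn f n x y \<le> \<epsilon>}) ` E) = UNIV" using assms unfolding spanning_def by auto
  fix B x z assume "B \<in> (\<lambda>y. {x. dn f n x y \<le> \<epsilon>}) ` E" "x \<in> B" "z \<in> B"
  then obtain y where "dn f n x y \<le> \<epsilon>" "dn f n z y \<le> \<epsilon>" by auto
  then show "dn f n x z \<le> 2 * \<epsilon>"
    using dn_triangle[OF assms(1), where f=f and x=x and y=y and z=z] dn_sym[where f=f and n=n and x=z and y=y] by linarith
qed

lemma cov_le_span: assumes "0 < n" "0 < \<epsilon>" shows "cov n (2*\<epsilon>) \<le> span_num f n \<epsilon>"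
proof -
  obtain E where E: "spanning n \<epsilon> E" "card E = span_num f n \<epsilon>" using span_obtain[OF assms] .
  have "cov n (2*\<epsilon>) \<le> card ((\<lambda>y. {x. dn f n x y \<le> \<epsilon>}) ` E)"
    by (rule cov_le[OF covering_from_spanning[OF assms(1) E(1)]])
  also have "\<dots> \<le> card E" using E(1) unfolding spanning_def by (intro card_image_le) auto
  finally show ?thesis using E by simp
qed

lemma covering_exists: assumes "0 < n" "0 < \<epsilon>" shows "\<exists>A. covering n \<epsilon> A"
proof -
  obtain E where "spanning n (\<epsilon>/2) E" using span_exists[of n "\<epsilon>/2"] assms by auto
  from covering_from_spanning[OF assms(1) this] show ?thesis by auto
qed

lemma cov_obtain:
  assumes "0 < n" "0 < \<epsilon>" obtains A where "covering n \<epsilon> A" "card A = cov n \<epsilon>"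
proof -
  have "{card A | A. covering n \<epsilon> A} \<noteq> {}" using covering_exists[OF assms] by auto
  from Inf_nat_def1[OF this] show ?thesis using that unfolding cov_def by auto
qed

lemma cov_pos: assumes "0 < n" "0 < \<epsilon>" shows "1 \<le> cov n \<epsilon>"
proof -
  obtain A where A: "covering n \<epsilon> A" "card A = cov n \<epsilon>" using cov_obtain[OF assms] .
  then have "A \<noteq> {}" unfolding covering_def by auto
  then show ?thesis using A unfolding covering_def by (metis One_nat_def Suc_leI card_gt_0_iff)
qed

lemma span_le_cov: assumes "0 < n" "0 < \<epsilon>" shows "span_num f n \<epsilon> \<le> cov n \<epsilon>"
proof -
  obtain A where A: "covering n \<epsilon> A" "card A = cov n \<epsilon>" using cov_obtain[OF assms] .
  define E where "E = (\<lambda>B. SOME x. x \<in> B) ` {B\<in>A. B \<noteq> {}}"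
  have fin: "finite A" using A unfolding covering_def by auto
  have "spanning n \<epsilon> E" unfolding spanning_def
  proof (intro conjI allI)
    show "finite E" unfolding E_def using fin by auto
    fix x
    obtain B where B: "B \<in> A" "x \<in> B" using A unfolding covering_def by blast
    then have "(SOME x. x \<in> B) \<in> B" by (meson someI)
    then show "\<exists>y\<in>E. dn f n x y \<le> \<epsilon>" using A B unfolding E_def covering_def by blast
  qed
  then have "span_num f n \<epsilon> \<le> card E" by (rule span_le)
  also have "\<dots> \<le> card {B\<in>A. B \<noteq> {}}" unfolding E_def by (rule card_image_le) (use fin in auto)
  also have "\<dots> \<le> card A" using fin by (intro card_mono) auto
  finally show ?thesis using A by simp
qed

lemma cov_mult: assumes "0 < n" "0 < m" "0 < \<epsilon>"
  shows "cov (n + m) \<epsilon> \<le> cov n \<epsilon> * cov m \<epsilon>"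
proof -
  obtain A1 where A1: "covering n \<epsilon> A1" "card A1 = cov n \<epsilon>" using cov_obtain assms by metis
  obtain A2 where A2: "covering m \<epsilon> A2" "card A2 = cov m \<epsilon>" using cov_obtain assms by metis
  define A where "A = (\<lambda>(B, C). B \<inter> (f ^^ n) -` C) ` (A1 \<times> A2)"
  have fin: "finite A1" "finite A2" using A1 A2 unfolding covering_def by auto
  have "covering (n+m) \<epsilon> A" unfolding covering_def
  proof (intro conjI ballI)
    show "finite A" unfolding A_def using fin by auto
    show "\<Union> A = UNIV"
    proof safe
      fix x :: 'a
      obtain B where "B \<in> A1" "x \<in> B" using A1 unfolding covering_def by blast
      moreover obtain C where "C \<in> A2" "(f ^^ n) x \<in> C" using A2 unfolding covering_def by blast
      ultimately show "x \<in> \<Union> A" unfolding A_def by blast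
    qed auto
    fix S x y assume "S \<in> A" "x \<in> S" "y \<in> S"
    then obtain B C where "B \<in> A1" "C \<in> A2" "x \<in> B" "y \<in> B" "(f^^n) x \<in> C" "(f^^n) y \<in> C"
      unfolding A_def by auto
    then have "dn f n x y \<le> \<epsilon>" "dn f m ((f^^n) x) ((f^^n) y) \<le> \<epsilon>"
      using A1 A2 unfolding covering_def by auto
    then show "dn f (n + m) x y \<le> \<epsilon>" using dn_add[OF assms(1,2), where f=f and x=x and y=y] by simp
  qed
  then have "cov (n+m) \<epsilon> \<le> card A" by (rule cov_le)
  also have "\<dots> \<le> card (A1 \<times> A2)" unfolding A_def by (rule card_image_le) (use fin in auto)
  also have "\<dots> = cov n \<epsilon> * cov m \<epsilon>" using A1 A2 by (simp add: card_cartesian_product)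
  finally show ?thesis .
qed

end


lemma fekete:
  fixes a :: "nat \<Rightarrow> real"
  assumes sub: "\<And>n m. 0 < n \<Longrightarrow> 0 < m \<Longrightarrow> a (n + m) \<le> a n + a m" and nn: "\<And>n. 0 \<le> a n"
  shows "limsup (\<lambda>n. ereal (a n / n)) \<le> liminf (\<lambda>n. ereal (a n / n))"
proof -
  have mult: "a (q * k) \<le> q * a k" if "0 < k" "0 < q" for q k
    using that(2)
  proof (induction q)
    case 0 then show ?case by simp
  next
    case (Suc q)
    show ?case
    proof (cases "q = 0")
      case True then show ?thesis by simp
    next
      case False
      then have "a (Suc q * k) = a (q * k + k)" by (simp add: add.commute)
      also have "\<dots> \<le> a (q * k) + a k" using False \<open>0 < k\<close> by (intro sub) auto
      also have "\<dots> \<le> q * a k + a k" using Suc False by simp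
      finally show ?thesis by (simp add: algebra_simps)
    qed
  qed
  have bound: "limsup (\<lambda>n. ereal (a n / n)) \<le> ereal (a k / k)" if "0 < k" for k
  proof -
    define M where "M = Max (a ` {..<k})"
    have M: "a r \<le> M" if "r < k" for r unfolding M_def using that by (intro Max_ge) auto
    have M0: "0 \<le> M" using M[of 0] nn[of 0] \<open>0 < k\<close> by linarith
    have ev: "ereal (a n / n) \<le> ereal (a k / k + M / n)" if "n \<ge> k" for n
    proof -
      define q where "q = n div k"
      define r where "r = n mod k"
      have n: "n = q * k + r" unfolding q_def r_def by simp
      have q: "0 < q" unfolding q_def using that \<open>0<k\<close> by (simp add: div_greater_zero_iff)
      have r: "r < k" unfolding r_def using \<open>0<k\<close> by simp
      have an: "a n \<le> q * a k + M"
      proof (cases "r = 0")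
        case True
        then show ?thesis using n mult[OF \<open>0<k\<close> q] M0 by simp
      next
        case False
        have "a n \<le> a (q * k) + a r" unfolding n using False q \<open>0<k\<close> by (intro sub) auto
        then show ?thesis using mult[OF \<open>0<k\<close> q] M[OF r] by linarith
      qed
      have npos: "0 < real n" using that \<open>0<k\<close> by simp
      have "q * k \<le> n" using n by simp
      then have "real q * real k \<le> real n" by (metis of_nat_le_iff of_nat_mult)
      then have "real q * a k \<le> real n * (a k / k)"
        using nn[of k] \<open>0<k\<close> mult_right_mono[OF \<open>real q * real k \<le> real n\<close> nn[of k]]
        by (simp add: field_simps)
      then have "a n \<le> real n * (a k / k) + M" using an by linarith
      then have "a n / n \<le> a k / k + M / n" using npos by (simp add: field_simps)
      then show ?thesis by simp
    qed
    have "limsup (\<lambda>n. ereal (a n / n)) \<le> limsup (\<lambda>n. ereal (a k / k + M / n))"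
      by (intro Limsup_mono eventually_sequentiallyI[of k]) (use ev in auto)
    also have "\<dots> = ereal (a k / k)"
    proof (rule lim_imp_Limsup)
      have "(\<lambda>n. a k / k + M / real n) \<longlonglongrightarrow> a k / k + 0"
        by (intro tendsto_add tendsto_const lim_const_over_n)
      then show "(\<lambda>n. ereal (a k / k + M / real n)) \<longlonglongrightarrow> ereal (a k / k)"
        by (simp add: tendsto_ereal)
    qed simp
    finally show ?thesis .
  qed
  define I where "I = (INF k\<in>{0<..}. ereal (a k / k))"
  have "limsup (\<lambda>n. ereal (a n / n)) \<le> I" unfolding I_def
    by (rule INF_greatest) (use bound in auto)
  also have "I \<le> liminf (\<lambda>n. ereal (a n / n))"
    by (intro Liminf_bounded eventually_sequentiallyI[of 1]) (auto simp: I_def intro!: INF_lower)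
  finally show ?thesis .
qed


context cds begin

definition Ls :: "real \<Rightarrow> ereal" where
  "Ls \<epsilon> = limsup (\<lambda>n. ereal (ln (real (span_num f n \<epsilon>)) / real n))"
definition ls :: "real \<Rightarrow> ereal" where
  "ls \<epsilon> = liminf (\<lambda>n. ereal (ln (real (span_num f n \<epsilon>)) / real n))"
definition H :: ereal where "H = (SUP \<epsilon>\<in>{0<..}. Ls \<epsilon>)"

lemma ln_div_mono: "1 \<le> a \<Longrightarrow> a \<le> b \<Longrightarrow> ereal (ln (real a) / real n) \<le> ereal (ln (real b) / real n)"
  by (auto intro!: divide_right_mono)

lemma Ls_anti: "0 < \<epsilon> \<Longrightarrow> \<epsilon> \<le> \<epsilon>' \<Longrightarrow> Ls \<epsilon>' \<le> Ls \<epsilon>"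
  unfolding Ls_def
  by (intro Limsup_mono eventually_sequentiallyI[of 1] ln_div_mono span_anti span_pos) auto

lemma ls_anti: "0 < \<epsilon> \<Longrightarrow> \<epsilon> \<le> \<epsilon>' \<Longrightarrow> ls \<epsilon>' \<le> ls \<epsilon>"
  unfolding ls_def
  by (intro Liminf_mono eventually_sequentiallyI[of 1] ln_div_mono span_anti span_pos) auto

lemma ls_le_Ls: "ls \<epsilon> \<le> Ls \<epsilon>"
  unfolding ls_def Ls_def by (rule Liminf_le_Limsup) simp

lemma Ls_le_H: "0 < \<epsilon> \<Longrightarrow> Ls \<epsilon> \<le> H"
  unfolding H_def by (rule SUP_upper) auto

lemma Ls_le_ls: assumes "0 < \<epsilon>" shows "Ls (2*\<epsilon>) \<le> ls \<epsilon>"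
proof -
  define a where "a n = ln (real (cov n (2*\<epsilon>)))" for n
  have e2: "0 < 2*\<epsilon>" using assms by simp
  have "Ls (2*\<epsilon>) \<le> limsup (\<lambda>n. ereal (a n / n))"
    unfolding Ls_def a_def
    by (intro Limsup_mono eventually_sequentiallyI[of 1] ln_div_mono span_le_cov span_pos e2) auto
  also have "\<dots> \<le> liminf (\<lambda>n. ereal (a n / n))"
  proof (rule fekete)
    fix n m :: nat assume nm: "0 < n" "0 < m"
    have "real (cov (n+m) (2*\<epsilon>)) \<le> real (cov n (2*\<epsilon>)) * real (cov m (2*\<epsilon>))"
      using cov_mult[OF nm e2] by (metis of_nat_le_iff of_nat_mult)
    moreover have "1 \<le> real (cov (n+m) (2*\<epsilon>))" "1 \<le> real (cov n (2*\<epsilon>))" "1 \<le> real (cov m (2*\<epsilon>))"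
      using cov_pos nm e2 by auto
    ultimately have "ln (real (cov (n+m) (2*\<epsilon>))) \<le> ln (real (cov n (2*\<epsilon>)) * real (cov m (2*\<epsilon>)))"
      by (subst ln_le_cancel_iff) auto
    also have "\<dots> = ln (real (cov n (2*\<epsilon>))) + ln (real (cov m (2*\<epsilon>)))"
      using \<open>1 \<le> real (cov n (2*\<epsilon>))\<close> \<open>1 \<le> real (cov m (2*\<epsilon>))\<close> by (intro ln_mult_pos) auto
    finally show "a (n + m) \<le> a n + a m" unfolding a_def .
  next
    fix n show "0 \<le> a n" unfolding a_def by (cases "cov n (2*\<epsilon>) = 0") auto
  qed
  also have "\<dots> \<le> ls \<epsilon>"
    unfolding ls_def a_def
    by (intro Liminf_mono eventually_sequentiallyI[of 1] ln_div_mono cov_le_span cov_pos e2 assms) auto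
  finally show ?thesis .
qed

lemma Ls_tendsto: "(Ls \<longlongrightarrow> H) (at_right 0)"
proof (rule order_tendstoI)
  fix a assume "a < H"
  then obtain \<epsilon>0 where e0: "0 < \<epsilon>0" "a < Ls \<epsilon>0" unfolding H_def by (auto simp: less_SUP_iff)
  show "\<forall>\<^sub>F x in at_right 0. a < Ls x"
    unfolding eventually_at_right[OF e0(1)]
    using e0 Ls_anti by (intro exI[of _ \<epsilon>0]) (auto intro: less_le_trans)
next
  fix b assume "H < b"
  show "\<forall>\<^sub>F x in at_right 0. Ls x < b"
    unfolding eventually_at_right[OF zero_less_one]
    using Ls_le_H \<open>H < b\<close> by (intro exI[of _ 1]) (auto intro: le_less_trans)
qed

lemma htop_eq: "h_top f = H"
  unfolding h_top_def using Ls_tendsto unfolding Ls_def[abs_def]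
  by (intro tendsto_Lim) auto

lemma squeeze:
  fixes g :: "real \<Rightarrow> ereal"
  assumes c: "0 < c" and d: "0 < d"
    and lo: "\<And>\<epsilon>. 0 < \<epsilon> \<Longrightarrow> \<epsilon> < e0 \<Longrightarrow> ls (c*\<epsilon>) \<le> g \<epsilon>"
    and up: "\<And>\<epsilon>. 0 < \<epsilon> \<Longrightarrow> \<epsilon> < e0 \<Longrightarrow> g \<epsilon> \<le> ls (d*\<epsilon>)"
    and e0: "0 < e0"
  shows "(g \<longlongrightarrow> H) (at_right 0)"
proof (rule order_tendstoI)
  fix a assume "a < H"
  then obtain \<epsilon>0 where E0: "0 < \<epsilon>0" "a < Ls \<epsilon>0" unfolding H_def by (auto simp: less_SUP_iff)
  define b where "b = min e0 (\<epsilon>0 / (2*c))"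
  have b: "0 < b" unfolding b_def using E0 c e0 by auto
  show "\<forall>\<^sub>F x in at_right 0. a < g x"
    unfolding eventually_at_right[OF b]
  proof (intro exI[of _ b] conjI allI impI)
    fix z assume z: "0 < z" "z < b"
    have "2 * (c*z) \<le> \<epsilon>0" using z c unfolding b_def by (simp add: field_simps)
    then have "a < Ls (2*(c*z))" using Ls_anti[of "2*(c*z)" \<epsilon>0] E0 z c by (auto intro: less_le_trans)
    also have "\<dots> \<le> ls (c*z)" using z c by (intro Ls_le_ls) auto
    also have "\<dots> \<le> g z" using z lo b_def by auto
    finally show "a < g z" .
  qed (use b in auto)
next
  fix b assume "H < b"
  show "\<forall>\<^sub>F x in at_right 0. g x < b"
    unfolding eventually_at_right[OF e0]
  proof (intro exI[of _ e0] conjI allI impI)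
    fix z assume z: "0 < z" "z < e0"
    have "g z \<le> ls (d*z)" using z up by auto
    also have "\<dots> \<le> Ls (d*z)" by (rule ls_le_Ls)
    also have "\<dots> \<le> H" using z d by (intro Ls_le_H) auto
    finally show "g z < b" using \<open>H < b\<close> by auto
  qed (use e0 in auto)
qed

end


lemma liminf_shift:
  fixes x :: "nat \<Rightarrow> real"
  shows "liminf (\<lambda>n. ereal ((x n + c) / real n)) = liminf (\<lambda>n. ereal (x n / real n))"
proof -
  have eq: "(\<lambda>n. ereal ((x n + c) / real n)) = (\<lambda>n. ereal (c / real n) + ereal (x n / real n))"
    by (simp add: add_divide_distrib add.commute)
  have "(\<lambda>n. ereal (c / real n)) \<longlonglongrightarrow> ereal 0"
    by (intro tendsto_ereal lim_const_over_n)
  then show ?thesis unfolding eq by (subst ereal_liminf_lim_add[where a=0]) (auto simp: zero_ereal_def)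
qed

lemma lnln_upper:
  fixes N s :: nat
  assumes "1 \<le> s" "real N \<le> 2 ^ s"
  shows "ln (ln (real N)) \<le> ln (real s) + 1"
proof (cases "N \<le> 1")
  case True
  then have "N = 0 \<or> N = 1" by auto
  then show ?thesis using assms by auto
next
  case False
  then have N2: "2 \<le> real N" by auto
  have "ln (real N) \<le> ln (2 ^ s)" using assms N2 by (subst ln_le_cancel_iff) auto
  also have "\<dots> = real s * ln 2" by (simp add: ln_realpow)
  also have "\<dots> \<le> real s" using ln_2_less_1 assms by (simp add: mult_left_le)
  finally have le: "ln (real N) \<le> real s" .
  have "0 < ln (real N)" using N2 by auto
  then have "ln (ln (real N)) \<le> ln (real s)" using le by (subst ln_le_cancel_iff) auto
  then show ?thesis by simp
qed

lemma lnln_lower_aux: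
  fixes N :: nat and c m :: real
  assumes "0 < c" "c * m \<le> ln (real N)" "1 \<le> m"
  shows "ln m + ln c \<le> ln (ln (real N))"
proof -
  have "0 < c * m" using assms by auto
  moreover then have "0 < ln (real N)" using assms by linarith
  ultimately have "ln (c * m) \<le> ln (ln (real N))" using assms by (subst ln_le_cancel_iff) auto
  then show ?thesis using assms by (simp add: ln_mult_pos)
qed

lemma lnln_lower:
  fixes N m :: nat
  assumes "1 \<le> m" "2 ^ m - 1 \<le> real N"
  shows "ln (real m) - 2 \<le> ln (ln (real N))"
proof (cases "N \<le> 1")
  case True
  then have "m \<le> 1"
  proof -
    have "(2::real) ^ m \<le> 2" using assms True by auto
    show ?thesis
    proof (rule ccontr)
      assume "\<not> m \<le> 1"
      then have "(2::real) ^ 2 \<le> 2 ^ m" by (intro power_increasing) auto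
      then show False using \<open>(2::real) ^ m \<le> 2\<close> by simp
    qed
  qed
  then have "m = 1" using assms by auto
  moreover have "N = 0 \<or> N = 1" using True by auto
  ultimately show ?thesis by auto
next
  case False
  then have N2: "2 \<le> real N" by auto
  have l2: "2/3 \<le> ln (2::real)" by (rule ln2_ge_two_thirds)
  show ?thesis
  proof (cases "m = 1")
    case True
    have "ln 2 \<le> ln (real N)" using N2 by (subst ln_le_cancel_iff) auto
    then have "2/3 \<le> ln (real N)" using l2 by linarith
    then have "ln (1/3) + ln 2 \<le> ln (ln (real N))" using lnln_lower_aux[of "1/3" 2 N] by simp
    moreover have "ln (1/3) + ln 2 \<ge> (-2::real)"
    proof -
      have "ln (1/3::real) = - ln 3" by (simp add: ln_div)
      moreover have "ln (3::real) \<le> 2" using ln_le_minus_one[of "3::real"] by simp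
      ultimately show ?thesis using l2 by linarith
    qed
    ultimately show ?thesis using True by simp
  next
    case False
    then have m2: "2 \<le> m" using assms by auto
    have "(2::real) ^ (m - 1) \<le> 2 ^ m - 1"
    proof -
      have "(2::real) ^ m = 2 * 2 ^ (m - 1)" using m2 by (simp add: power_eq_if)
      moreover have "1 \<le> (2::real) ^ (m - 1)" by simp
      ultimately show ?thesis by linarith
    qed
    then have "(2::real) ^ (m - 1) \<le> real N" using assms by linarith
    then have "ln (2 ^ (m - 1)) \<le> ln (real N)" using N2 by (subst ln_le_cancel_iff) auto
    then have "real (m - 1) * ln 2 \<le> ln (real N)" by (simp add: ln_realpow)
    moreover have "(1/3) * real m \<le> real (m - 1) * ln 2"
    proof -
      have "(1/3) * real m \<le> real (m - 1) * (2/3)" using m2 by (simp add: of_nat_diff)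
      also have "\<dots> \<le> real (m - 1) * ln 2" using l2 by (intro mult_left_mono) auto
      finally show ?thesis .
    qed
    ultimately have "(1/3) * real m \<le> ln (real N)" by linarith
    then have "ln (real m) + ln (1/3) \<le> ln (ln (real N))" using lnln_lower_aux[of "1/3" "real m" N] m2 by simp
    moreover have "ln (1/3::real) \<ge> -2"
    proof -
      have "ln (1/3::real) = - ln 3" by (simp add: ln_div)
      moreover have "ln (3::real) \<le> 2" using ln_le_minus_one[of "3::real"] by simp
      ultimately show ?thesis by linarith
    qed
    ultimately show ?thesis by linarith
  qed
qed


context cds begin

definition separated :: "nat \<Rightarrow> real \<Rightarrow> 'a set \<Rightarrow> bool" where
  "separated n \<rho> F \<longleftrightarrow> finite F \<and> (\<forall>a\<in>F. \<forall>b\<in>F. a \<noteq> b \<longrightarrow> \<rho> < dn f n a b)"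

lemma sep_card_le:
  assumes "0 < n" "separated n \<rho> F" "spanning n (\<rho>/2) E"
  shows "card F \<le> card E"
proof -
  define g where "g a = (SOME y. y \<in> E \<and> dn f n a y \<le> \<rho>/2)" for a
  have g: "g a \<in> E \<and> dn f n a (g a) \<le> \<rho>/2" for a
    unfolding g_def by (rule someI_ex) (use assms(3) spanning_def in auto)
  have "inj_on g F"
  proof (rule inj_onI, rule ccontr)
    fix a b assume ab: "a \<in> F" "b \<in> F" "g a = g b" "a \<noteq> b"
    have "dn f n a b \<le> dn f n a (g a) + dn f n (g a) b" by (rule dn_triangle[OF assms(1)])
    also have "\<dots> \<le> \<rho>" using g[of a] g[of b] ab(3) dn_sym[of f n b "g b"] by simp
    finally show False using assms(2) ab unfolding separated_def by force
  qed
  then show ?thesis using g assms(3) unfolding spanning_def by (intro card_inj_on_le) auto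
qed

lemma sep_exists:
  assumes "0 < n" "0 < \<rho>"
  shows "\<exists>F. separated n \<rho> F \<and> span_num f n \<rho> \<le> card F"
proof -
  obtain E where E: "spanning n (\<rho>/2) E" using span_exists[of n "\<rho>/2"] assms by auto
  define S where "S = {card F | F. separated n \<rho> F}"
  have Sb: "S \<subseteq> {..card E}" unfolding S_def using sep_card_le[OF assms(1) _ E] by auto
  have finS: "finite S" using finite_subset[OF Sb] by auto
  have "0 \<in> S" unfolding S_def separated_def by (intro CollectI exI[of _ "{}"]) auto
  then have "Max S \<in> S" using finS by (intro Max_in) auto
  then obtain F where F: "separated n \<rho> F" "card F = Max S" unfolding S_def by auto
  have "spanning n \<rho> F" unfolding spanning_def
  proof (intro conjI allI)
    show "finite F" using F separated_def by auto
    fix x show "\<exists>y\<in>F. dn f n x y \<le> \<rho>"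
    proof (rule ccontr)
      assume H: "\<not> (\<exists>y\<in>F. dn f n x y \<le> \<rho>)"
      then have xF: "x \<notin> F" using assms by force
      have "separated n \<rho> (insert x F)" unfolding separated_def
      proof (intro conjI ballI impI)
        show "finite (insert x F)" using F separated_def by auto
        fix a b assume "a \<in> insert x F" "b \<in> insert x F" "a \<noteq> b"
        then show "\<rho> < dn f n a b" using H F(1) dn_sym[of f n _ x] unfolding separated_def
          by (auto simp: not_le)
      qed
      then have "card (insert x F) \<in> S" unfolding S_def by auto
      then have "card (insert x F) \<le> Max S" using finS by auto
      then show False using F xF separated_def by auto
    qed
  qed
  then show ?thesis using F(1) span_le by blast
qed

lemma dn_set_less:
  assumes "0 < n" "A \<noteq> {}"
  shows "dn_set f n x A < e \<longleftrightarrow> (\<exists>a\<in>A. dn f n x a < e)"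
proof -
  have "bdd_below {dn f n x a | a. a \<in> A}" using dn_nonneg[OF assms(1)] by (intro bdd_belowI[of _ 0]) auto
  then show ?thesis unfolding dn_set_def using assms by (subst cInf_less_iff) auto
qed

lemma nbhd_iff: "0 < n \<Longrightarrow> A \<noteq> {} \<Longrightarrow> x \<in> nbhd f n e A \<longleftrightarrow> (\<exists>a\<in>A. dn f n x a < e)"
  unfolding nbhd_def using dn_set_less by auto

lemma nbhd_mono: "s \<le> e \<Longrightarrow> nbhd f n s A \<subseteq> nbhd f n e A"
  unfolding nbhd_def by auto

lemma Hn_le:
  assumes "0 < n" "B \<noteq> {}" "C \<noteq> {}" "0 \<le> \<epsilon>"
    and H: "\<And>e. \<epsilon> < e \<Longrightarrow> B \<subseteq> nbhd f n e C \<and> C \<subseteq> nbhd f n e B"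
  shows "Hn f n B C \<le> \<epsilon>"
proof (rule field_le_epsilon)
  fix d :: real assume "0 < d"
  define S where "S = {\<epsilon>. \<epsilon> > 0 \<and> B \<subseteq> nbhd f n \<epsilon> C \<and> C \<subseteq> nbhd f n \<epsilon> B}"
  have "\<epsilon> + d \<in> S" unfolding S_def using H[of "\<epsilon> + d"] \<open>0 < d\<close> assms(4) by simp
  moreover have "bdd_below S" unfolding S_def by (rule bdd_belowI[of _ 0]) simp
  ultimately have "Inf S \<le> \<epsilon> + d" by (rule cInf_lower)
  then show "Hn f n B C \<le> \<epsilon> + d" unfolding Hn_def S_def .
qed

lemma Hn_use:
  assumes "0 < n" "B \<noteq> {}" "C \<noteq> {}" "Hn f n B C \<le> \<epsilon>" "\<epsilon> < e"
  shows "B \<subseteq> nbhd f n e C \<and> C \<subseteq> nbhd f n e B"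
proof -
  define S where "S = {\<epsilon>. \<epsilon> > 0 \<and> B \<subseteq> nbhd f n \<epsilon> C \<and> C \<subseteq> nbhd f n \<epsilon> B}"
  have all: "X \<subseteq> nbhd f n (D+1) Y" if XY: "X \<noteq> {}" "Y \<noteq> {}" for X Y
  proof
    fix x assume "x \<in> X"
    obtain c where c: "c \<in> Y" using XY(2) by auto
    have "dn f n x c < D + 1" using dn_le_D[OF assms(1), of x c] by linarith
    then show "x \<in> nbhd f n (D+1) Y" using nbhd_iff[OF assms(1) XY(2)] c by blast
  qed
  have "D + 1 \<in> S" unfolding S_def using all[of B C] all[of C B] assms(2,3) D_nonneg by simp
  then have "S \<noteq> {}" by auto
  moreover have "bdd_below S" unfolding S_def by (rule bdd_belowI[of _ 0]) simp
  moreover have "Inf S < e" using assms(4,5) unfolding Hn_def S_def by simp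
  ultimately obtain s where s: "s \<in> S" "s < e" using cInf_less_iff by metis
  then have "nbhd f n s C \<subseteq> nbhd f n e C" "nbhd f n s B \<subseteq> nbhd f n e B" using nbhd_mono[of s e] by auto
  then show ?thesis using s(1) unfolding S_def by blast
qed

definition NKgood :: "nat \<Rightarrow> real \<Rightarrow> 'a set set \<Rightarrow> bool" where
  "NKgood n \<epsilon> G \<longleftrightarrow> finite G \<and> G \<subseteq> KX \<and> (\<forall>B\<in>KX. \<exists>C\<in>G. Hn f n B C \<le> \<epsilon>)"

lemma NK_alt: "NK f n \<epsilon> = Inf {card G | G. NKgood n \<epsilon> G}"
  unfolding NK_def NKgood_def by simp

lemma NKgood_from_spanning:
  assumes "0 < n" "0 < \<epsilon>" "spanning n \<epsilon> E"
  shows "NKgood n \<epsilon> {C. C \<subseteq> E \<and> C \<noteq> {}}"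
  unfolding NKgood_def
proof (intro conjI ballI)
  have finE: "finite E" using assms spanning_def by auto
  then show "finite {C. C \<subseteq> E \<and> C \<noteq> {}}" by auto
  show "{C. C \<subseteq> E \<and> C \<noteq> {}} \<subseteq> KX" unfolding KX_def using finE
    by (auto intro: finite_imp_closed finite_subset)
  fix B :: "'a set" assume B: "B \<in> KX"
  define C where "C = {y\<in>E. \<exists>b\<in>B. dn f n b y \<le> \<epsilon>}"
  have Bne: "B \<noteq> {}" using B KX_def by auto
  have Cne: "C \<noteq> {}" using Bne assms(3) unfolding C_def spanning_def by blast
  have "Hn f n B C \<le> \<epsilon>"
  proof (rule Hn_le[OF assms(1) Bne Cne])
    fix e assume "\<epsilon> < e"
    show "B \<subseteq> nbhd f n e C \<and> C \<subseteq> nbhd f n e B"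
    proof
      show "B \<subseteq> nbhd f n e C"
      proof
        fix b assume "b \<in> B"
        then obtain y where "y \<in> E" "dn f n b y \<le> \<epsilon>" using assms(3) spanning_def by blast
        then show "b \<in> nbhd f n e C" using \<open>b\<in>B\<close> \<open>\<epsilon><e\<close> nbhd_iff[OF assms(1) Cne] unfolding C_def by force
      qed
      show "C \<subseteq> nbhd f n e B"
      proof
        fix y assume "y \<in> C"
        then obtain b where "b \<in> B" "dn f n b y \<le> \<epsilon>" unfolding C_def by auto
        then show "y \<in> nbhd f n e B" using \<open>\<epsilon><e\<close> nbhd_iff[OF assms(1) Bne] dn_sym[of f n b y] by force
      qed
    qed
  qed (use assms in auto)
  moreover have "C \<in> {C. C \<subseteq> E \<and> C \<noteq> {}}" using Cne unfolding C_def by auto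
  ultimately show "\<exists>C\<in>{C. C \<subseteq> E \<and> C \<noteq> {}}. Hn f n B C \<le> \<epsilon>" by blast
qed

lemma NK_upper: assumes "0 < n" "0 < \<epsilon>" shows "NK f n \<epsilon> \<le> 2 ^ span_num f n \<epsilon>"
proof -
  obtain E where E: "spanning n \<epsilon> E" "card E = span_num f n \<epsilon>" using span_obtain[OF assms] .
  have finE: "finite E" using E spanning_def by auto
  have "NK f n \<epsilon> \<le> card {C. C \<subseteq> E \<and> C \<noteq> {}}"
    unfolding NK_alt by (rule cInf_lower) (use NKgood_from_spanning[OF assms E(1)] in auto)
  also have "\<dots> \<le> card (Pow E)" using finE by (intro card_mono) auto
  also have "\<dots> = 2 ^ span_num f n \<epsilon>" using finE E by (simp add: card_Pow)
  finally show ?thesis .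
qed

lemma NK_obtain:
  assumes "0 < n" "0 < \<epsilon>" obtains G where "NKgood n \<epsilon> G" "card G = NK f n \<epsilon>"
proof -
  obtain E where E: "spanning n \<epsilon> E" using span_exists[OF assms] by auto
  have "{card G | G. NKgood n \<epsilon> G} \<noteq> {}" using NKgood_from_spanning[OF assms E] by auto
  from Inf_nat_def1[OF this] show ?thesis using that unfolding NK_alt by auto
qed

lemma NK_lower:
  assumes "0 < n" "0 < \<epsilon>" "separated n (3*\<epsilon>) F"
  shows "2 ^ card F - 1 \<le> NK f n \<epsilon>"
proof -
  obtain G where G: "NKgood n \<epsilon> G" "card G = NK f n \<epsilon>" using NK_obtain[OF assms(1,2)] .
  have finF: "finite F" using assms separated_def by auto
  define P where "P = Pow F - {{}}"
  have PKX: "P \<subseteq> KX" unfolding P_def KX_def using finF by (auto intro: finite_imp_closed finite_subset)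
  define \<phi> where "\<phi> S = (SOME C. C \<in> G \<and> Hn f n S C \<le> \<epsilon>)" for S
  have \<phi>: "\<phi> S \<in> G \<and> Hn f n S (\<phi> S) \<le> \<epsilon>" if "S \<in> P" for S
    unfolding \<phi>_def by (rule someI_ex) (use G PKX that NKgood_def in blast)
  have key: False if ST: "S \<in> P" "T \<in> P" "\<phi> S = \<phi> T" "a \<in> S" "a \<notin> T" for S T a
  proof -
    define C where "C = \<phi> S"
    have Cne: "C \<noteq> {}" using \<phi>[OF ST(1)] G PKX unfolding C_def NKgood_def KX_def by auto
    have Sne: "S \<noteq> {}" "T \<noteq> {}" using ST P_def by auto
    have e: "\<epsilon> < 3*\<epsilon>/2" using assms by auto
    have 1: "S \<subseteq> nbhd f n (3*\<epsilon>/2) C"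
      using Hn_use[OF assms(1) Sne(1) Cne _ e] \<phi>[OF ST(1)] C_def by auto
    have 2: "C \<subseteq> nbhd f n (3*\<epsilon>/2) T"
      using Hn_use[OF assms(1) Sne(2) Cne _ e] \<phi>[OF ST(2)] C_def ST(3) by auto
    obtain c where c: "c \<in> C" "dn f n a c < 3*\<epsilon>/2" using 1 ST(4) nbhd_iff[OF assms(1) Cne] by blast
    obtain t where t: "t \<in> T" "dn f n c t < 3*\<epsilon>/2" using 2 c(1) nbhd_iff[OF assms(1) Sne(2)] by blast
    have "dn f n a t < 3*\<epsilon>" using dn_triangle[OF assms(1), where f=f and x=a and y=c and z=t] c t by linarith
    moreover have "a \<in> F" "t \<in> F" "a \<noteq> t" using ST t P_def by auto
    ultimately show False using assms(3) unfolding separated_def by force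
  qed
  have "inj_on \<phi> P"
  proof (rule inj_onI, rule ccontr)
    fix S T assume "S \<in> P" "T \<in> P" "\<phi> S = \<phi> T" "S \<noteq> T"
    then obtain a where "(a \<in> S \<and> a \<notin> T) \<or> (a \<in> T \<and> a \<notin> S)" by blast
    then show False using key \<open>S \<in> P\<close> \<open>T \<in> P\<close> \<open>\<phi> S = \<phi> T\<close> by metis
  qed
  then have "card P \<le> card G" using \<phi> G NKgood_def by (intro card_inj_on_le) auto
  moreover have "card P = 2 ^ card F - 1" unfolding P_def using finF by (simp add: card_Pow)
  ultimately show ?thesis using G by simp
qed


lemma NK_bounds:
  assumes "0 < n" "0 < \<epsilon>"
  shows "ln (ln (real (NK f n \<epsilon>))) \<le> ln (real (span_num f n \<epsilon>)) + 1"
    and "ln (real (span_num f n (3*\<epsilon>))) + (-2) \<le> ln (ln (real (NK f n \<epsilon>)))"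
proof -
  have "real (NK f n \<epsilon>) \<le> real (2 ^ span_num f n \<epsilon>)" using NK_upper[OF assms] by (simp only: of_nat_le_iff)
  then show "ln (ln (real (NK f n \<epsilon>))) \<le> ln (real (span_num f n \<epsilon>)) + 1"
    using span_pos[OF assms] by (intro lnln_upper) auto
next
  obtain F where F: "separated n (3*\<epsilon>) F" "span_num f n (3*\<epsilon>) \<le> card F"
    using sep_exists[of n "3*\<epsilon>"] assms by auto
  have s1: "1 \<le> span_num f n (3*\<epsilon>)" using span_pos assms by auto
  have "2 ^ card F - 1 \<le> NK f n \<epsilon>" by (rule NK_lower[OF assms F(1)])
  then have "real (2 ^ card F - 1) \<le> real (NK f n \<epsilon>)" by (simp only: of_nat_le_iff)
  moreover have "real (2 ^ card F - 1) = 2 ^ card F - 1" by (simp add: of_nat_diff)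
  ultimately have "ln (real (card F)) - 2 \<le> ln (ln (real (NK f n \<epsilon>)))"
    using s1 F(2) by (intro lnln_lower) auto
  moreover have "ln (real (span_num f n (3*\<epsilon>))) \<le> ln (real (card F))"
    using s1 F(2) by (subst ln_le_cancel_iff) auto
  ultimately show "ln (real (span_num f n (3*\<epsilon>))) + (-2) \<le> ln (ln (real (NK f n \<epsilon>)))" by linarith
qed

lemma NK_tendsto: "((\<lambda>\<epsilon>. liminf (\<lambda>n. ereal (ln (ln (real (NK f n \<epsilon>))) / real n))) \<longlongrightarrow> H) (at_right 0)"
proof (rule squeeze[of 3 1 1])
  fix \<epsilon> :: real assume e: "0 < \<epsilon>" "\<epsilon> < 1"
  have "ls (3*\<epsilon>) = liminf (\<lambda>n. ereal ((ln (real (span_num f n (3*\<epsilon>))) + (-2)) / real n))"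
    unfolding ls_def by (rule liminf_shift[symmetric])
  also have "\<dots> \<le> liminf (\<lambda>n. ereal (ln (ln (real (NK f n \<epsilon>))) / real n))"
    by (intro Liminf_mono eventually_sequentiallyI[of 1]) (use NK_bounds(2) e in \<open>auto intro!: divide_right_mono\<close>)
  finally show "ls (3*\<epsilon>) \<le> liminf (\<lambda>n. ereal (ln (ln (real (NK f n \<epsilon>))) / real n))" .
  have "liminf (\<lambda>n. ereal (ln (ln (real (NK f n \<epsilon>))) / real n))
      \<le> liminf (\<lambda>n. ereal ((ln (real (span_num f n \<epsilon>)) + 1) / real n))"
    by (intro Liminf_mono eventually_sequentiallyI[of 1]) (use NK_bounds(1) e in \<open>auto intro!: divide_right_mono\<close>)
  also have "\<dots> = ls (1*\<epsilon>)" unfolding ls_def by (simp add: liminf_shift)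
  finally show "liminf (\<lambda>n. ereal (ln (ln (real (NK f n \<epsilon>))) / real n)) \<le> ls (1*\<epsilon>)" .
qed auto

end


definition UU :: "real measure" where "UU = uniform_measure lborel {0..1}"

lemma UU_prob: "prob_space UU"
  unfolding UU_def by (rule prob_space_uniform_measure) auto

lemma sets_UU[measurable_cong]: "sets UU = sets borel"
  unfolding UU_def by simp

lemma space_UU[simp]: "space UU = UNIV"
  using sets_eq_imp_space_eq[OF sets_UU] by simp

lemma UU_less:
  assumes "0 \<le> r" "r \<le> 1" shows "measure UU {u. u < r} = r"
proof -
  have eq: "{0..1} \<inter> {u. u < r} = {0..<r}" using assms by auto
  have "emeasure UU {u. u < r} = emeasure lborel ({0..1} \<inter> {u. u < r}) / emeasure lborel {0..1::real}"
    unfolding UU_def by (rule emeasure_uniform_measure) auto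
  also have "\<dots> = ennreal r" unfolding eq using assms by (simp add: divide_ennreal_def)
  finally show ?thesis unfolding measure_def using assms by simp
qed

lemma UU_ge:
  assumes "0 \<le> r" "r \<le> 1" shows "measure UU {u. \<not> u < r} = 1 - r"
proof -
  interpret prob_space UU by (rule UU_prob)
  have "{u. \<not> u < r} = space UU - {u. u < r}" by auto
  moreover have "{u::real. u < r} \<in> sets UU" unfolding sets_UU by measurable
  ultimately show ?thesis using prob_compl[of "{u. u < r}"] UU_less[OF assms] by simp
qed

context cds begin

lemma dn_meas[measurable]: "(\<lambda>x. dn f n x a) \<in> borel_measurable borel"
  by (rule borel_measurable_continuous_onI[OF cont_dn1])

lemma dn_pair_meas[measurable]: "(\<lambda>p. dn f n (fst p) (snd p)) \<in> borel_measurable borel"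
  by (rule borel_measurable_continuous_onI[OF cont_dn_pair])

lemma singleton_sets: "{z} \<in> sets (borel :: 'a measure)"
  by (rule borel_closed) simp

lemma probs_eqI:
  assumes "\<nu>1 \<in> probs" "\<nu>2 \<in> probs" "finite S" "emeasure \<nu>1 (UNIV - S) = 0" "emeasure \<nu>2 (UNIV - S) = 0"
    and "\<And>z. z \<in> S \<Longrightarrow> measure \<nu>1 {z} = measure \<nu>2 {z}"
  shows "\<nu>1 = \<nu>2"
proof -
  have P: "prob_space \<nu>1" "prob_space \<nu>2" "sets \<nu>1 = sets borel" "sets \<nu>2 = sets borel"
    using assms unfolding probs_def by auto
  have red: "emeasure \<nu> A = (\<Sum>z\<in>A \<inter> S. ennreal (measure \<nu> {z}))"
    if "prob_space \<nu>" "sets \<nu> = sets borel" "emeasure \<nu> (UNIV - S) = 0" "A \<in> sets \<nu>" for \<nu> A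
  proof -
    interpret prob_space \<nu> by fact
    have sp: "space \<nu> = UNIV" using sets_eq_imp_space_eq[OF that(2)] by simp
    have S: "S \<in> sets \<nu>" using that(2) assms(3) by (simp add: finite_imp_closed)
    have "emeasure \<nu> A \<le> emeasure \<nu> (A \<inter> S) + emeasure \<nu> (A - S)"
    proof -
      have "A = (A \<inter> S) \<union> (A - S)" by auto
      then have "emeasure \<nu> A = emeasure \<nu> ((A \<inter> S) \<union> (A - S))" by simp
      also have "\<dots> \<le> emeasure \<nu> (A \<inter> S) + emeasure \<nu> (A - S)"
        using S that(4) by (intro emeasure_subadditive) auto
      finally show ?thesis .
    qed
    moreover have "emeasure \<nu> (A - S) \<le> emeasure \<nu> (UNIV - S)"
    proof (rule emeasure_mono)
      show "UNIV - S \<in> sets \<nu>" using S sp sets.compl_sets[of S \<nu>] by simp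
    qed blast
    moreover have "emeasure \<nu> (A \<inter> S) \<le> emeasure \<nu> A" using S that(4) by (intro emeasure_mono) auto
    ultimately have "emeasure \<nu> A = emeasure \<nu> (A \<inter> S)" using that(3) by (simp add: order_antisym)
    also have "\<dots> = (\<Sum>z\<in>A \<inter> S. emeasure \<nu> {z})"
      using assms(3) that(2) singleton_sets by (intro emeasure_eq_sum_singleton) auto
    also have "\<dots> = (\<Sum>z\<in>A \<inter> S. ennreal (measure \<nu> {z}))"
      by (intro sum.cong refl emeasure_eq_measure)
    finally show ?thesis .
  qed
  show ?thesis
  proof (rule measure_eqI)
    show "sets \<nu>1 = sets \<nu>2" using P by simp
    fix A assume "A \<in> sets \<nu>1"
    then have A2: "A \<in> sets \<nu>2" using P by simp
    have "(\<Sum>z\<in>A \<inter> S. ennreal (measure \<nu>1 {z})) = (\<Sum>z\<in>A \<inter> S. ennreal (measure \<nu>2 {z}))"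
      by (rule sum.cong) (use assms(6) in auto)
    then show "emeasure \<nu>1 A = emeasure \<nu>2 A"
      unfolding red[OF P(1) P(3) assms(4) \<open>A \<in> sets \<nu>1\<close>] red[OF P(2) P(4) assms(5) A2] .
  qed
qed


context
  fixes n :: nat and \<epsilon> :: real and E :: "'a set" and y :: "nat \<Rightarrow> 'a"
  assumes n0: "0 < n" and e0: "0 < \<epsilon>" and Esp: "spanning n (\<epsilon>/2) E"
    and yb: "bij_betw y {..<card E} E"
begin

lemma finE: "finite E" using Esp unfolding spanning_def by auto
lemma Ene: "E \<noteq> {}" using spanning_nonempty[OF Esp] .
lemma cardE: "0 < card E" using finE Ene by auto
lemma yE: "y ` {..<card E} = E" using yb unfolding bij_betw_def by auto
lemma yinj: "inj_on y {..<card E}" using yb unfolding bij_betw_def by auto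

definition jj :: "'a \<Rightarrow> nat" where "jj x = (LEAST i. i < card E \<and> dn f n x (y i) \<le> \<epsilon>/2)"

lemma jj: "jj x < card E \<and> dn f n x (y (jj x)) \<le> \<epsilon>/2"
proof -
  obtain z where "z \<in> E" "dn f n x z \<le> \<epsilon>/2" using Esp unfolding spanning_def by auto
  moreover from this(1) have "z \<in> y ` {..<card E}" using yE by simp
  ultimately obtain i where "i < card E" "dn f n x (y i) \<le> \<epsilon>/2" by auto
  then show ?thesis unfolding jj_def by (intro LeastI[where P="\<lambda>i. i < card E \<and> dn f n x (y i) \<le> \<epsilon>/2"]) auto
qed

lemma jj_meas: "jj \<in> borel \<rightarrow>\<^sub>M count_space UNIV"
  unfolding jj_def by (rule measurable_Least) measurable

lemma cell_sets: "{x. jj x = i} \<in> sets borel"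
  using measurable_sets[OF jj_meas, of "{i}"] by (simp add: vimage_def)

definition KK :: nat where "KK = nat \<lceil>2 * D * real (card E) / \<epsilon>\<rceil> + 1"

lemma KK1: "1 \<le> KK" unfolding KK_def by simp

lemma KK2: "D * real (card E) / real KK \<le> \<epsilon>/2"
proof -
  define x where "x = 2 * D * real (card E) / \<epsilon>"
  have x0: "0 \<le> x" unfolding x_def using D_nonneg e0 by simp
  have "real (nat \<lceil>x\<rceil>) = real_of_int \<lceil>x\<rceil>" using x0 by simp
  moreover have "x \<le> real_of_int \<lceil>x\<rceil>" by (rule le_of_int_ceiling)
  moreover have "KK = nat \<lceil>x\<rceil> + 1" unfolding KK_def x_def by simp
  moreover have "real KK = real (nat \<lceil>x\<rceil>) + 1" using \<open>KK = nat \<lceil>x\<rceil> + 1\<close> by simp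
  ultimately have "x \<le> real KK" by linarith
  then have "2 * D * real (card E) / \<epsilon> \<le> real KK" unfolding x_def .
  then have "2 * D * real (card E) \<le> real KK * \<epsilon>" using e0 by (simp add: field_simps)
  then show ?thesis using KK1 by (simp add: field_simps)
qed

lemma KK3: "real KK \<le> 2 * D * real (card E) / \<epsilon> + 2"
proof -
  define x where "x = 2 * D * real (card E) / \<epsilon>"
  have x0: "0 \<le> x" unfolding x_def using D_nonneg e0 by simp
  have "real (nat \<lceil>x\<rceil>) = real_of_int \<lceil>x\<rceil>" using x0 by simp
  moreover have "real_of_int \<lceil>x\<rceil> < x + 1" using ceiling_correct[of x] by linarith
  moreover have "KK = nat \<lceil>x\<rceil> + 1" unfolding KK_def x_def by simp
  moreover have "real KK = real (nat \<lceil>x\<rceil>) + 1" using \<open>KK = nat \<lceil>x\<rceil> + 1\<close> by simp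
  ultimately have "real KK \<le> x + 2" by linarith
  then show ?thesis unfolding x_def .
qed

definition FF :: "'a measure set" where
  "FF = {\<nu> \<in> probs. emeasure \<nu> (UNIV - E) = 0 \<and> (\<forall>i<card E. \<exists>l::nat. measure \<nu> {y i} = real l / real KK)}"

lemma FF_card: "finite FF \<and> card FF \<le> (KK + 1) ^ card E"
proof -
  define \<Psi> where "\<Psi> \<nu> = (\<lambda>i\<in>{..<card E}. measure \<nu> {y i})" for \<nu> :: "'a measure"
  define T where "T = PiE {..<card E} (\<lambda>_. (\<lambda>l. real l / real KK) ` {..KK})"
  have fT: "finite T" unfolding T_def by (intro finite_PiE) auto
  have cT: "card T \<le> (KK + 1) ^ card E"
  proof -
    have "card T = (\<Prod>i<card E. card ((\<lambda>l. real l / real KK) ` {..KK}))" unfolding T_def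
      by (simp add: card_PiE)
    also have "\<dots> \<le> (\<Prod>i<card E. KK + 1)"
      by (intro prod_mono conjI) (auto intro: order_trans[OF card_image_le])
    finally show ?thesis by simp
  qed
  have img: "\<Psi> ` FF \<subseteq> T"
  proof
    fix v assume "v \<in> \<Psi> ` FF"
    then obtain \<nu> where \<nu>: "\<nu> \<in> FF" "v = \<Psi> \<nu>" by auto
    then interpret prob_space \<nu> unfolding FF_def probs_def by auto
    have "v i \<in> (\<lambda>l. real l / real KK) ` {..KK}" if iE: "i < card E" for i
    proof -
      obtain l :: nat where l: "measure \<nu> {y i} = real l / real KK" using \<nu> iE unfolding FF_def by auto
      have "measure \<nu> {y i} \<le> 1" by simp
      then have "real l \<le> real KK" using l KK1 by (simp add: field_simps)
      then have "l \<in> {..KK}" by simp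
      then show ?thesis using l \<nu>(2) iE unfolding \<Psi>_def by auto
    qed
    moreover have "v \<in> extensional {..<card E}" using \<nu>(2) unfolding \<Psi>_def by auto
    ultimately show "v \<in> T" unfolding T_def by (auto simp: PiE_def)
  qed
  have inj: "inj_on \<Psi> FF"
  proof (rule inj_onI)
    fix \<nu>1 \<nu>2 assume H: "\<nu>1 \<in> FF" "\<nu>2 \<in> FF" "\<Psi> \<nu>1 = \<Psi> \<nu>2"
    show "\<nu>1 = \<nu>2"
    proof (rule probs_eqI[of _ _ E])
      fix z assume "z \<in> E"
      then obtain i where "i < card E" "z = y i" using yE by auto
      then show "measure \<nu>1 {z} = measure \<nu>2 {z}" using fun_cong[OF H(3), of i] unfolding \<Psi>_def by auto
    qed (use H finE in \<open>auto simp: FF_def\<close>)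
  qed
  have "finite FF" using inj_on_finite[OF inj img fT] .
  moreover have "card FF \<le> card T" using card_inj_on_le[OF inj img fT] .
  ultimately show ?thesis using cT by simp
qed

context
  fixes \<mu> :: "'a measure" assumes mu: "\<mu> \<in> probs"
begin

lemma mu_prob: "prob_space \<mu>" using mu unfolding probs_def by auto
lemma sets_mu[measurable_cong]: "sets \<mu> = sets borel" using mu unfolding probs_def by auto
lemma space_mu[simp]: "space \<mu> = UNIV" using sets_eq_imp_space_eq[OF sets_mu] by simp

definition w :: "nat \<Rightarrow> real" where "w i = measure \<mu> {x. jj x = i}"
definition ll :: "nat \<Rightarrow> nat" where "ll i = nat \<lfloor>real KK * w i\<rfloor>"
definition r :: "nat \<Rightarrow> real" where
  "r i = (if i = 0 then 1 else if w i = 0 then 0 else (real (ll i) / real KK) / w i)"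
definition Y :: "nat \<Rightarrow> real \<Rightarrow> 'a" where "Y i u = (if i = 0 \<or> u < r i then y i else y 0)"
definition hh :: "'a \<times> real \<Rightarrow> 'a \<times> 'a" where "hh p = (fst p, Y (jj (fst p)) (snd p))"
definition PP :: "('a \<times> real) measure" where "PP = \<mu> \<Otimes>\<^sub>M UU"
definition pi :: "('a \<times> 'a) measure" where "pi = distr PP borel hh"
definition nu :: "'a measure" where "nu = distr pi borel snd"

lemma w_nonneg: "0 \<le> w i" unfolding w_def by simp
lemma w_le1: "w i \<le> 1"
proof -
  interpret prob_space \<mu> by (rule mu_prob)
  show ?thesis unfolding w_def by simp
qed

lemma ll_le: "real (ll i) / real KK \<le> w i" and ll_ge: "w i - real (ll i) / real KK \<le> 1 / real KK"
proof -
  have K: "0 < real KK" using KK1 by simp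
  have z: "0 \<le> real KK * w i" using w_nonneg K by simp
  have e: "real (ll i) = real_of_int \<lfloor>real KK * w i\<rfloor>" unfolding ll_def using z by simp
  have "real_of_int \<lfloor>real KK * w i\<rfloor> \<le> real KK * w i" by simp
  then show "real (ll i) / real KK \<le> w i" using e K by (simp add: field_simps)
  have "real KK * w i < real_of_int \<lfloor>real KK * w i\<rfloor> + 1" by linarith
  then have a: "real KK * w i - real (ll i) \<le> 1" using e by linarith
  have "w i - real (ll i) / real KK = (real KK * w i - real (ll i)) / real KK" using K by (simp add: field_simps)
  also have "\<dots> \<le> 1 / real KK" using a K by (intro divide_right_mono) auto
  finally show "w i - real (ll i) / real KK \<le> 1 / real KK" .
qed

lemma r_range: "0 \<le> r i \<and> r i \<le> 1"
proof (cases "i = 0 \<or> w i = 0")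
  case True then show ?thesis unfolding r_def by auto
next
  case False
  then have wp: "0 < w i" using w_nonneg[of i] by auto
  have "0 \<le> real (ll i) / real KK" by simp
  moreover have "real (ll i) / real KK / w i \<le> 1"
  proof -
    have K: "0 < real KK" using KK1 by simp
    have "real (ll i) \<le> real KK * w i" using ll_le[of i] K by (simp add: field_simps)
    then show ?thesis using K wp by (simp add: divide_le_eq_1)
  qed
  ultimately show ?thesis unfolding r_def using False wp by auto
qed

lemma w_r: assumes i: "i \<noteq> 0" shows "w i * r i = real (ll i) / real KK"
proof (cases "w i = 0")
  case True
  then show ?thesis using i unfolding r_def ll_def by simp
next
  case False
  then show ?thesis using i unfolding r_def by simp
qed

lemma PP_prob: "prob_space PP" unfolding PP_def by (intro prob_space_pair mu_prob UU_prob)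
lemma space_PP[simp]: "space PP = UNIV" unfolding PP_def by (simp add: space_pair_measure)

lemma rect_sets: "A \<in> sets borel \<Longrightarrow> B \<in> sets borel \<Longrightarrow> A \<times> B \<in> sets PP"
  unfolding PP_def by (intro pair_measureI) (auto simp: sets_mu sets_UU)

lemma rect_measure: "A \<in> sets borel \<Longrightarrow> B \<in> sets borel \<Longrightarrow> measure PP (A \<times> B) = measure \<mu> A * measure UU B"
proof -
  assume AB: "A \<in> sets borel" "B \<in> sets borel"
  interpret sigma_finite_measure UU using UU_prob by (rule prob_space_imp_sigma_finite)
  interpret mu: prob_space \<mu> by (rule mu_prob)
  interpret U: prob_space UU by (rule UU_prob)
  have "emeasure PP (A \<times> B) = emeasure \<mu> A * emeasure UU B"
    unfolding PP_def using AB by (intro emeasure_pair_measure_Times) (auto simp: sets_mu sets_UU)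
  then show ?thesis unfolding measure_def
    by (simp add: mu.emeasure_eq_measure U.emeasure_eq_measure ennreal_mult'' enn2real_mult)
qed

lemma meas_jjfst: "(\<lambda>p. jj (fst p)) \<in> PP \<rightarrow>\<^sub>M count_space UNIV"
proof -
  have "fst \<in> PP \<rightarrow>\<^sub>M \<mu>" unfolding PP_def by (rule measurable_fst)
  then have "fst \<in> PP \<rightarrow>\<^sub>M borel" by (simp add: measurable_cong_sets[OF refl sets_mu])
  then show ?thesis using jj_meas by (rule measurable_compose)
qed

lemma meas_fst_borel: "fst \<in> PP \<rightarrow>\<^sub>M borel"
proof -
  have "fst \<in> PP \<rightarrow>\<^sub>M \<mu>" unfolding PP_def by (rule measurable_fst)
  then show ?thesis by (simp add: measurable_cong_sets[OF refl sets_mu])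
qed

lemma meas_snd_borel: "snd \<in> PP \<rightarrow>\<^sub>M borel"
proof -
  have "snd \<in> PP \<rightarrow>\<^sub>M UU" unfolding PP_def by (rule measurable_snd)
  then show ?thesis by (simp add: measurable_cong_sets[OF refl sets_UU])
qed

lemma meas_pair_const: "(\<lambda>p. (fst p, c)) \<in> PP \<rightarrow>\<^sub>M (borel :: ('a \<times> 'a) measure)"
proof -
  have "(\<lambda>x::'a. (x, c)) \<in> borel \<rightarrow>\<^sub>M (borel :: ('a \<times> 'a) measure)"
    by (intro borel_measurable_continuous_onI continuous_intros)
  from measurable_compose[OF meas_fst_borel this] show ?thesis by simp
qed

lemma meas_Y_const: "(\<lambda>p::'a\<times>real. c) \<in> PP \<rightarrow>\<^sub>M (borel :: 'a measure)" by simp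

lemma hh_meas: "hh \<in> PP \<rightarrow>\<^sub>M borel"
proof -
  have F: "(\<lambda>p. (fst p, if i = 0 \<or> snd p < r i then y i else y 0)) \<in> PP \<rightarrow>\<^sub>M (borel :: ('a \<times> 'a) measure)" for i
  proof -
    have eq: "(\<lambda>p. (fst p, if i = 0 \<or> snd p < r i then y i else y 0))
        = (\<lambda>p. if i = 0 \<or> snd p < r i then (fst p, y i) else (fst p, y 0))" by auto
    show ?thesis unfolding eq
    proof (rule measurable_If[OF meas_pair_const meas_pair_const])
      have "{p \<in> space PP. i = 0 \<or> snd p < r i} = (if i = 0 then UNIV \<times> UNIV else UNIV \<times> {u. u < r i})" by auto
      moreover have "(UNIV :: 'a set) \<times> (UNIV :: real set) \<in> sets PP" "(UNIV :: 'a set) \<times> {u. u < r i} \<in> sets PP"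
        by (intro rect_sets; simp)+
      ultimately show "{p \<in> space PP. i = 0 \<or> snd p < r i} \<in> sets PP" by simp
    qed
  qed
  have "(\<lambda>p. (\<lambda>i p. (fst p, if i = 0 \<or> snd p < r i then y i else y 0)) (jj (fst p)) p) \<in> PP \<rightarrow>\<^sub>M borel"
    by (rule measurable_compose_countable[OF F meas_jjfst])
  then show ?thesis unfolding hh_def Y_def by simp
qed

lemma pi_prob: "prob_space pi"
  unfolding pi_def by (rule prob_space.prob_space_distr[OF PP_prob hh_meas])

lemma sets_pi: "sets pi = sets borel" unfolding pi_def by simp

lemma fst_borel: "fst \<in> (borel :: ('a \<times> 'a) measure) \<rightarrow>\<^sub>M borel"
  by (intro borel_measurable_continuous_onI continuous_intros)
lemma snd_borel: "snd \<in> (borel :: ('a \<times> 'a) measure) \<rightarrow>\<^sub>M borel"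
  by (intro borel_measurable_continuous_onI continuous_intros)

lemma pi_fst: "distr pi borel fst = \<mu>"
proof -
  have "distr pi borel fst = distr PP borel (fst \<circ> hh)"
    unfolding pi_def by (rule distr_distr[OF fst_borel hh_meas])
  also have "\<dots> = distr PP \<mu> fst"
    by (rule distr_cong) (auto simp: hh_def sets_mu)
  also have "\<dots> = \<mu>" unfolding PP_def by (rule prob_space.distr_pair_fst[OF UU_prob])
  finally show ?thesis .
qed

lemma nu_eq: "nu = distr PP borel (\<lambda>p. Y (jj (fst p)) (snd p))"
proof -
  have "nu = distr PP borel (snd \<circ> hh)"
    unfolding nu_def pi_def by (rule distr_distr[OF snd_borel hh_meas])
  then show ?thesis by (simp add: hh_def comp_def)
qed

lemma g_meas: "(\<lambda>p. Y (jj (fst p)) (snd p)) \<in> PP \<rightarrow>\<^sub>M borel"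
  using measurable_compose[OF hh_meas snd_borel] by (simp add: hh_def comp_def)

lemma nu_prob: "nu \<in> probs"
proof -
  have "snd \<in> pi \<rightarrow>\<^sub>M (borel :: 'a measure)"
    by (subst measurable_cong_sets[OF sets_pi refl]) (rule snd_borel)
  then show ?thesis unfolding probs_def nu_def
    using prob_space.prob_space_distr[OF pi_prob] by simp
qed

lemma pi_coupling: "pi \<in> couplings \<mu> nu"
  unfolding couplings_def using pi_prob sets_pi pi_fst nu_def by simp

lemma Y_in: "i < card E \<Longrightarrow> Y i u \<in> E"
  unfolding Y_def using yE cardE by auto

lemma nu_emeasure: "A \<in> sets borel \<Longrightarrow> emeasure nu A = emeasure PP ((\<lambda>p. Y (jj (fst p)) (snd p)) -` A)"
  unfolding nu_eq by (subst emeasure_distr[OF g_meas]) auto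

lemma nu_measure: "A \<in> sets borel \<Longrightarrow> measure nu A = measure PP ((\<lambda>p. Y (jj (fst p)) (snd p)) -` A)"
  unfolding measure_def using nu_emeasure by simp

lemma E_closed: "closed E" using finE by (rule finite_imp_closed)

lemma nu_null: "emeasure nu (UNIV - E) = 0"
proof -
  have "(\<lambda>p. Y (jj (fst p)) (snd p)) -` (UNIV - E) = {}" using Y_in jj by auto
  moreover have "UNIV - E \<in> sets borel" using E_closed by (intro borel_open) (simp add: open_Diff)
  ultimately show ?thesis using nu_emeasure by simp
qed

lemma nu_yi:
  assumes "0 < i" "i < card E" shows "measure nu {y i} = real (ll i) / real KK"
proof -
  have pt: "Y (jj x) u = y i \<longleftrightarrow> jj x = i \<and> u < r i" for x u
  proof
    assume H: "Y (jj x) u = y i"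
    have jx: "jj x < card E" using jj by auto
    have y0: "y 0 \<noteq> y i" using yinj assms cardE by (metis inj_on_contraD lessThan_iff less_not_refl2)
    have yj: "y (jj x) = y i \<Longrightarrow> jj x = i" using yinj assms jx by (meson inj_on_contraD lessThan_iff)
    have "jj x = i"
      using H y0 yj unfolding Y_def by (auto split: if_splits)
    moreover then have "u < r i" using H y0 assms unfolding Y_def by (auto split: if_splits)
    ultimately show "jj x = i \<and> u < r i" by simp
  next
    assume "jj x = i \<and> u < r i"
    then show "Y (jj x) u = y i" unfolding Y_def by simp
  qed
  have pre: "(\<lambda>p. Y (jj (fst p)) (snd p)) -` {y i} = {x. jj x = i} \<times> {u. u < r i}"
    using pt by auto
  have "measure nu {y i} = measure PP ({x. jj x = i} \<times> {u. u < r i})"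
    using nu_measure[OF singleton_sets] pre by simp
  also have "\<dots> = w i * measure UU {u. u < r i}"
    unfolding w_def by (intro rect_measure cell_sets) simp
  also have "\<dots> = w i * r i" using UU_less r_range by simp
  also have "\<dots> = real (ll i) / real KK" using w_r assms by simp
  finally show ?thesis .
qed

lemma nu_FF: "nu \<in> FF"
proof -
  interpret prob_space nu using nu_prob unfolding probs_def by auto
  have sp: "space nu = UNIV" using sets_eq_imp_space_eq[of nu borel] nu_prob unfolding probs_def by simp
  have Eev: "E \<in> events" using nu_prob E_closed unfolding probs_def by simp
  have "prob (space nu - E) = 0" using nu_null sp by (simp add: measure_def)
  then have mE: "prob E = 1" using prob_compl[OF Eev] by simp
  have "emeasure nu E = (\<Sum>z\<in>E. emeasure nu {z})"
    using finE nu_prob singleton_sets unfolding probs_def by (intro emeasure_eq_sum_singleton) auto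
  then have "ennreal (prob E) = ennreal (\<Sum>z\<in>E. prob {z})"
    by (simp add: emeasure_eq_measure sum_ennreal)
  then have "prob E = (\<Sum>z\<in>E. prob {z})"
    by (subst (asm) ennreal_inj) (auto intro: sum_nonneg)
  also have "\<dots> = (\<Sum>i<card E. prob {y i})"
    using sum.reindex[OF yinj, of "\<lambda>z. prob {z}"] yE by simp
  also have "\<dots> = (\<Sum>i\<in>{0..<card E}. prob {y i})" by (simp add: lessThan_atLeast0)
  also have "\<dots> = prob {y 0} + (\<Sum>i\<in>{1..<card E}. prob {y i})"
    using cardE by (subst sum.atLeast_Suc_lessThan) auto
  also have "(\<Sum>i\<in>{1..<card E}. prob {y i}) = (\<Sum>i\<in>{1..<card E}. real (ll i) / real KK)"
    by (intro sum.cong refl nu_yi) auto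
  finally have y0: "prob {y 0} = 1 - (\<Sum>i\<in>{1..<card E}. real (ll i) / real KK)" using mE by simp
  define L where "L = (\<Sum>i\<in>{1..<card E}. ll i)"
  have K: "0 < real KK" using KK1 by simp
  have "(\<Sum>i\<in>{1..<card E}. real (ll i) / real KK) = real L / real KK"
    unfolding L_def by (simp add: sum_divide_distrib)
  then have "prob {y 0} = 1 - real L / real KK" using y0 by simp
  also have "\<dots> = (real KK - real L) / real KK" using K by (simp add: diff_divide_distrib)
  finally have y0': "prob {y 0} = (real KK - real L) / real KK" .
  have "0 \<le> prob {y 0}" by simp
  then have "0 \<le> (real KK - real L) / real KK" using y0' by simp
  then have "0 \<le> real KK - real L" using K by (simp add: zero_le_divide_iff)
  then have "real L \<le> real KK" by simp
  then have "L \<le> KK" by simp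
  then have y0'': "prob {y 0} = real (KK - L) / real KK" using y0' by (simp add: of_nat_diff)
  have "\<forall>i<card E. \<exists>l::nat. prob {y i} = real l / real KK"
  proof (intro allI impI)
    fix i assume "i < card E"
    show "\<exists>l::nat. prob {y i} = real l / real KK"
    proof (cases "i = 0")
      case True then show ?thesis using y0'' by auto
    next
      case False then show ?thesis using nu_yi \<open>i < card E\<close> by auto
    qed
  qed
  then show ?thesis unfolding FF_def using nu_prob nu_null by auto
qed

definition Bad :: "('a \<times> real) set" where
  "Bad = (\<Union>i\<in>{1..<card E}. {x. jj x = i} \<times> {u. \<not> u < r i})"

lemma Bad_sets: "Bad \<in> sets PP"
  unfolding Bad_def by (intro sets.finite_UN ballI rect_sets cell_sets) auto

lemma Bad_measure: "measure PP Bad \<le> real (card E) / real KK"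
proof -
  interpret prob_space PP by (rule PP_prob)
  have "measure PP Bad \<le> (\<Sum>i\<in>{1..<card E}. measure PP ({x. jj x = i} \<times> {u. \<not> u < r i}))"
    unfolding Bad_def by (intro finite_measure_subadditive_finite) (auto intro!: rect_sets cell_sets)
  also have "\<dots> = (\<Sum>i\<in>{1..<card E}. w i * (1 - r i))"
    by (intro sum.cong refl) (simp add: rect_measure cell_sets UU_ge r_range w_def)
  also have "\<dots> = (\<Sum>i\<in>{1..<card E}. w i - real (ll i) / real KK)"
  proof (intro sum.cong refl)
    fix i assume "i \<in> {1..<card E}"
    then have "w i * r i = real (ll i) / real KK" by (intro w_r) auto
    then show "w i * (1 - r i) = w i - real (ll i) / real KK" by (simp add: algebra_simps)
  qed
  also have "\<dots> \<le> (\<Sum>i\<in>{1..<card E}. 1 / real KK)"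
    by (intro sum_mono ll_ge)
  also have "\<dots> \<le> real (card E) / real KK" by (simp add: divide_right_mono)
  finally show ?thesis .
qed

lemma integral_pi: "integral\<^sup>L pi (\<lambda>p. dn f n (fst p) (snd p)) \<le> \<epsilon>"
proof -
  interpret prob_space PP by (rule PP_prob)
  have "integral\<^sup>L pi (\<lambda>p. dn f n (fst p) (snd p)) = integral\<^sup>L PP (\<lambda>p. dn f n (fst (hh p)) (snd (hh p)))"
    unfolding pi_def by (rule integral_distr[OF hh_meas dn_pair_meas])
  also have "\<dots> = integral\<^sup>L PP (\<lambda>p. dn f n (fst p) (Y (jj (fst p)) (snd p)))"
    by (simp add: hh_def)
  also have "\<dots> \<le> integral\<^sup>L PP (\<lambda>p. \<epsilon>/2 + D * indicator Bad p)"
  proof (rule integral_mono)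
    have m: "(\<lambda>p. dn f n (fst p) (Y (jj (fst p)) (snd p))) \<in> borel_measurable PP"
      using measurable_compose[OF hh_meas dn_pair_meas] by (simp add: hh_def)
    show "integrable PP (\<lambda>p. dn f n (fst p) (Y (jj (fst p)) (snd p)))"
    proof (rule integrable_const_bound[where B=D])
      show "AE p in PP. norm (dn f n (fst p) (Y (jj (fst p)) (snd p))) \<le> D"
      proof (intro AE_I2)
        fix p :: "'a \<times> real"
        show "norm (dn f n (fst p) (Y (jj (fst p)) (snd p))) \<le> D"
          using dn_le_D[OF n0, of "fst p" "Y (jj (fst p)) (snd p)"] dn_nonneg[OF n0, of f "fst p" "Y (jj (fst p)) (snd p)"]
          by simp
      qed
    qed (rule m)
    show "integrable PP (\<lambda>p. \<epsilon>/2 + D * indicator Bad p)"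
    proof (intro Bochner_Integration.integrable_add integrable_mult_right)
      show "integrable PP (\<lambda>p. \<epsilon> / 2)" by simp
      show "integrable PP (indicator Bad :: 'a \<times> real \<Rightarrow> real)"
        using Bad_sets by (intro integrable_real_indicator) (auto simp: emeasure_eq_measure)
    qed
    fix p :: "'a \<times> real"
    obtain x u where p: "p = (x, u)" by fastforce
    show "dn f n (fst p) (Y (jj (fst p)) (snd p)) \<le> \<epsilon>/2 + D * indicator Bad p"
    proof (cases "p \<in> Bad")
      case True
      have "dn f n (fst p) (Y (jj (fst p)) (snd p)) \<le> D" by (rule dn_le_D[OF n0])
      then show ?thesis using True e0 by simp
    next
      case False
      then have "jj x = 0 \<or> u < r (jj x)" using jj[of x] unfolding Bad_def p by auto
      then have "Y (jj x) u = y (jj x)" unfolding Y_def by auto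
      then show ?thesis using False jj[of x] p by simp
    qed
  qed
  also have "\<dots> = \<epsilon>/2 + D * measure PP Bad"
  proof -
    have i: "integrable PP (indicator Bad :: 'a \<times> real \<Rightarrow> real)"
      using Bad_sets by (intro integrable_real_indicator) (auto simp: emeasure_eq_measure)
    have "integral\<^sup>L PP (\<lambda>p. \<epsilon>/2 + D * indicator Bad p) = integral\<^sup>L PP (\<lambda>p. \<epsilon>/2) + integral\<^sup>L PP (\<lambda>p. D * indicator Bad p)"
      using i by (intro Bochner_Integration.integral_add) auto
    also have "\<dots> = \<epsilon>/2 + D * measure PP Bad" using Bad_sets prob_space by (simp flip: space_PP)
    finally show ?thesis .
  qed
  also have "\<dots> \<le> \<epsilon>/2 + D * (real (card E) / real KK)"
    using Bad_measure D_nonneg by (intro add_left_mono mult_left_mono) auto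
  also have "\<dots> \<le> \<epsilon>" using KK2 by (simp only: times_divide_eq_right[symmetric])
  finally show ?thesis .
qed

lemma W1_nu: "W1n f n \<mu> nu \<le> \<epsilon>"
  unfolding W1n_def
proof (rule cInf_lower2)
  show "integral\<^sup>L pi (\<lambda>p. dn f n (fst p) (snd p)) \<in> {integral\<^sup>L \<pi> (\<lambda>p. dn f n (fst p) (snd p)) | \<pi>. \<pi> \<in> couplings \<mu> nu}"
    using pi_coupling by auto
  show "integral\<^sup>L pi (\<lambda>p. dn f n (fst p) (snd p)) \<le> \<epsilon>" by (rule integral_pi)
  show "bdd_below {integral\<^sup>L \<pi> (\<lambda>p. dn f n (fst p) (snd p)) | \<pi>. \<pi> \<in> couplings \<mu> nu}"
    by (rule bdd_belowI[of _ 0]) (use dn_nonneg[OF n0] in \<open>auto intro!: Bochner_Integration.integral_nonneg\<close>)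
qed

end

lemma NM_le_FF: "NM f n \<epsilon> \<le> card FF"
  unfolding NM_def
proof (rule cInf_lower)
  have "\<forall>\<mu>\<in>probs. \<exists>\<nu>\<in>FF. W1n f n \<mu> \<nu> \<le> \<epsilon>"
    using nu_FF W1_nu by blast
  moreover have "FF \<subseteq> probs" unfolding FF_def by auto
  ultimately show "card FF \<in> {card E' |E'. finite E' \<and> E' \<subseteq> probs \<and> (\<forall>\<mu>\<in>probs. \<exists>\<nu>\<in>E'. W1n f n \<mu> \<nu> \<le> \<epsilon>)}"
    using FF_card by blast
qed simp

lemma NM_good_exists: "\<exists>E'. finite E' \<and> E' \<subseteq> probs \<and> (\<forall>\<mu>\<in>probs. \<exists>\<nu>\<in>E'. W1n f n \<mu> \<nu> \<le> \<epsilon>)"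
proof -
  have "\<forall>\<mu>\<in>probs. \<exists>\<nu>\<in>FF. W1n f n \<mu> \<nu> \<le> \<epsilon>"
    using nu_FF W1_nu by blast
  moreover have "FF \<subseteq> probs" unfolding FF_def by auto
  ultimately show ?thesis using FF_card by blast
qed

end

lemma NM_upper_gen:
  assumes "0 < n" "0 < \<epsilon>"
  shows "\<exists>K::nat. real K \<le> 2 * D * real (span_num f n (\<epsilon>/2)) / \<epsilon> + 2 \<and> NM f n \<epsilon> \<le> (K + 1) ^ span_num f n (\<epsilon>/2)"
    and "\<exists>E'. finite E' \<and> E' \<subseteq> probs \<and> (\<forall>\<mu>\<in>probs. \<exists>\<nu>\<in>E'. W1n f n \<mu> \<nu> \<le> \<epsilon>)"
proof -
  have e2: "0 < \<epsilon>/2" using assms by simp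
  obtain E where E: "spanning n (\<epsilon>/2) E" "card E = span_num f n (\<epsilon>/2)" using span_obtain[OF assms(1) e2] .
  have "finite E" using E spanning_def by auto
  then obtain y where y: "bij_betw y {0..<card E} E" using ex_bij_betw_nat_finite by blast
  then have y': "bij_betw y {..<card E} E" by (simp add: lessThan_atLeast0)
  note L = NM_le_FF[OF assms(1,2) E(1) y'] FF_card[OF assms(1,2) E(1) y'] KK3[OF assms(1,2) E(1) y']
  show "\<exists>K::nat. real K \<le> 2 * D * real (span_num f n (\<epsilon>/2)) / \<epsilon> + 2 \<and> NM f n \<epsilon> \<le> (K + 1) ^ span_num f n (\<epsilon>/2)"
    using L E(2) by (intro exI[of _ "KK \<epsilon> E"]) auto
  show "\<exists>E'. finite E' \<and> E' \<subseteq> probs \<and> (\<forall>\<mu>\<in>probs. \<exists>\<nu>\<in>E'. W1n f n \<mu> \<nu> \<le> \<epsilon>)"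
    by (rule NM_good_exists[OF assms(1,2) E(1) y'])
qed

end


lemma twoi: "2*i + x = 2*i' + (x'::nat) \<Longrightarrow> x \<le> 1 \<Longrightarrow> x' \<le> 1 \<Longrightarrow> i = i' \<and> x = x'"
  by presburger

context cds begin

context
  fixes n :: nat and \<epsilon> :: real and F :: "'a set" and h :: "nat \<Rightarrow> 'a"
  assumes n0: "0 < n" and e0: "0 < \<epsilon>" and sepF: "separated n (64*\<epsilon>) F"
    and hb: "bij_betw h {..<card F} F" and m2: "2 \<le> card F"
begin

definition kk :: nat where "kk = card F div 2"

lemma kk1: "1 \<le> kk" unfolding kk_def using m2 by presburger

lemma idx: "i < kk \<Longrightarrow> 2*i + 1 < card F" unfolding kk_def by presburger

lemma hinj: "inj_on h {..<card F}" using hb unfolding bij_betw_def by auto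
lemma hF: "h ` {..<card F} = F" using hb unfolding bij_betw_def by auto

definition ix :: "nat set \<Rightarrow> nat \<Rightarrow> nat" where "ix S i = 2*i + (if i \<in> S then 0 else 1)"
definition cc :: "nat set \<Rightarrow> nat \<Rightarrow> 'a" where "cc S i = h (ix S i)"

lemma ix_lt: assumes "i < kk" shows "ix S i < card F"
  using idx[OF assms] unfolding ix_def by (auto split: if_splits)

lemma cc_F: assumes "i < kk" shows "cc S i \<in> F"
proof -
  have "ix S i \<in> {..<card F}" using ix_lt[OF assms] by simp
  then have "h (ix S i) \<in> h ` {..<card F}" by (rule imageI)
  then show ?thesis unfolding cc_def hF .
qed

lemma cc_eq:
  assumes "i < kk" "i' < kk"
  shows "cc S i = cc T i' \<longleftrightarrow> (i = i' \<and> (i \<in> S \<longleftrightarrow> i \<in> T))"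
proof -
  have "cc S i = cc T i' \<longleftrightarrow> ix S i = ix T i'"
  proof
    assume "cc S i = cc T i'"
    then have "h (ix S i) = h (ix T i')" unfolding cc_def .
    moreover have "ix S i \<in> {..<card F}" "ix T i' \<in> {..<card F}" using ix_lt assms by auto
    ultimately show "ix S i = ix T i'" using inj_onD[OF hinj] by blast
  qed (simp add: cc_def)
  also have "\<dots> \<longleftrightarrow> (i = i' \<and> (i \<in> S \<longleftrightarrow> i \<in> T))"
  proof
    assume H: "ix S i = ix T i'"
    have "2*i + (if i \<in> S then 0 else 1) = 2*i' + (if i' \<in> T then 0 else 1)" using H unfolding ix_def .
    then have "i = i' \<and> (if i \<in> S then 0 else 1::nat) = (if i' \<in> T then 0 else 1)"
      by (rule twoi) auto
    then show "i = i' \<and> (i \<in> S \<longleftrightarrow> i \<in> T)" by (auto split: if_splits)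
  qed (auto simp: ix_def)
  finally show ?thesis .
qed

lemma cc_inj: "inj_on (cc S) {..<kk}"
proof (rule inj_onI)
  fix x y assume "x \<in> {..<kk}" "y \<in> {..<kk}" "cc S x = cc S y"
  then show "x = y" using cc_eq[of x y S S] by simp
qed

definition QQ :: "nat measure" where "QQ = measure_pmf (pmf_of_set {..<kk})"
definition muS :: "nat set \<Rightarrow> 'a measure" where "muS S = distr QQ borel (cc S)"
definition UB :: "'a \<Rightarrow> 'a set" where "UB z = {x. dn f n z x < 32*\<epsilon>}"

lemma QQ_prob: "prob_space QQ" unfolding QQ_def by (rule prob_space_measure_pmf)
lemma sets_QQ: "sets QQ = UNIV" unfolding QQ_def by simp
lemma space_QQ[simp]: "space QQ = UNIV" unfolding QQ_def by simp
lemma cc_meas: "cc S \<in> QQ \<rightarrow>\<^sub>M borel" unfolding QQ_def by (simp add: measurable_pmf_measure1)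

lemma UB_sets: "UB z \<in> sets borel"
  unfolding UB_def by (intro borel_open open_Collect_less cont_dn2 continuous_on_const)

lemma UB_disj: assumes "z \<in> F" "z' \<in> F" "z \<noteq> z'" shows "UB z \<inter> UB z' = {}"
proof (rule ccontr)
  assume "UB z \<inter> UB z' \<noteq> {}"
  then obtain x where "dn f n z x < 32*\<epsilon>" "dn f n z' x < 32*\<epsilon>" unfolding UB_def by auto
  then have "dn f n z z' < 64*\<epsilon>"
    using dn_triangle[OF n0, where f=f and x=z and y=x and z=z'] dn_sym[where f=f and n=n and x=z' and y=x] by linarith
  then show False using sepF assms unfolding separated_def by force
qed

lemma muS_probs: "muS S \<in> probs"
  unfolding probs_def muS_def using prob_space.prob_space_distr[OF QQ_prob cc_meas] by simp

lemma muS_point: assumes "i < kk" shows "measure (muS S) {cc S i} = 1 / real kk"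
proof -
  have "measure (muS S) {cc S i} = measure QQ (cc S -` {cc S i} \<inter> space QQ)"
    unfolding muS_def by (rule measure_distr[OF cc_meas singleton_sets])
  also have "\<dots> = real (card ({..<kk} \<inter> (cc S -` {cc S i}))) / real (card {..<kk})"
    unfolding QQ_def using kk1 by (subst measure_pmf_of_set) (auto simp: lessThan_empty_iff)
  also have "{..<kk} \<inter> (cc S -` {cc S i}) = {i}" using cc_eq[of _ i S S] assms by auto
  finally show ?thesis by simp
qed

lemma coupling_exists: assumes "\<nu> \<in> probs" shows "couplings (muS S) \<nu> \<noteq> {}"
proof -
  have P\<nu>: "prob_space \<nu>" and s\<nu>: "sets \<nu> = sets borel" using assms probs_def by auto
  define g where "g p = (cc S (fst p), snd p)" for p :: "nat \<times> 'a"
  define M where "M = QQ \<Otimes>\<^sub>M \<nu>"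
  have fst_m: "fst \<in> M \<rightarrow>\<^sub>M count_space UNIV"
  proof -
    have "fst \<in> M \<rightarrow>\<^sub>M QQ" unfolding M_def by (rule measurable_fst)
    moreover have sQ: "sets QQ = sets (count_space UNIV)" using sets_QQ by simp
    ultimately show ?thesis by (simp add: measurable_cong_sets[OF refl sQ])
  qed
  have snd_m: "snd \<in> M \<rightarrow>\<^sub>M borel"
  proof -
    have "snd \<in> M \<rightarrow>\<^sub>M \<nu>" unfolding M_def by (rule measurable_snd)
    then show ?thesis by (simp add: measurable_cong_sets[OF refl s\<nu>])
  qed
  have gi: "(\<lambda>p. (c, snd p)) \<in> M \<rightarrow>\<^sub>M (borel :: ('a \<times> 'a) measure)" for c
  proof -
    have "(\<lambda>x::'a. (c, x)) \<in> borel \<rightarrow>\<^sub>M (borel :: ('a \<times> 'a) measure)"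
      by (intro borel_measurable_continuous_onI continuous_intros)
    from measurable_compose[OF snd_m this] show ?thesis by simp
  qed
  have g_m: "g \<in> M \<rightarrow>\<^sub>M borel"
    using measurable_compose_countable[OF gi fst_m] unfolding g_def by simp
  define \<pi> where "\<pi> = distr M borel g"
  have PM: "prob_space M" unfolding M_def by (intro prob_space_pair QQ_prob P\<nu>)
  have "\<pi> \<in> couplings (muS S) \<nu>"
    unfolding couplings_def
  proof (intro CollectI conjI)
    show "prob_space \<pi>" unfolding \<pi>_def by (rule prob_space.prob_space_distr[OF PM g_m])
    show "sets \<pi> = sets borel" unfolding \<pi>_def by simp
    have fb: "fst \<in> (borel :: ('a \<times> 'a) measure) \<rightarrow>\<^sub>M borel"
      by (intro borel_measurable_continuous_onI continuous_intros)
    have sb: "snd \<in> (borel :: ('a \<times> 'a) measure) \<rightarrow>\<^sub>M borel"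
      by (intro borel_measurable_continuous_onI continuous_intros)
    have "distr \<pi> borel fst = distr M borel (fst \<circ> g)"
      unfolding \<pi>_def by (rule distr_distr[OF fb g_m])
    also have "\<dots> = distr M borel (cc S \<circ> fst)" by (simp add: g_def comp_def)
    also have "\<dots> = distr (distr M QQ fst) borel (cc S)"
      by (rule distr_distr[symmetric, OF cc_meas]) (unfold M_def, rule measurable_fst)
    also have "distr M QQ fst = QQ" unfolding M_def by (rule prob_space.distr_pair_fst[OF P\<nu>])
    finally show "distr \<pi> borel fst = muS S" unfolding muS_def .
    have "distr \<pi> borel snd = distr M borel (snd \<circ> g)"
      unfolding \<pi>_def by (rule distr_distr[OF sb g_m])
    also have "\<dots> = distr M borel snd" by (simp add: g_def comp_def)
    also have "\<dots> = \<nu>"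
    proof (rule measure_eqI)
      show "sets (distr M borel snd) = sets \<nu>" using s\<nu> by simp
      fix A assume "A \<in> sets (distr M borel snd)"
      then have A: "A \<in> sets borel" by simp
      interpret sf: sigma_finite_measure \<nu> using P\<nu> by (rule prob_space_imp_sigma_finite)
      interpret pq: prob_space QQ by (rule QQ_prob)
      have sp: "space M = UNIV \<times> space \<nu>" unfolding M_def by (simp add: space_pair_measure)
      have "emeasure (distr M borel snd) A = emeasure M (snd -` A \<inter> space M)"
        by (rule emeasure_distr[OF snd_m A])
      also have "snd -` A \<inter> space M = UNIV \<times> A"
        using sets.sets_into_space[of A \<nu>] A s\<nu> sp by auto
      also have "emeasure M (UNIV \<times> A) = emeasure QQ UNIV * emeasure \<nu> A"
        unfolding M_def using A s\<nu> sets_QQ by (intro sf.emeasure_pair_measure_Times) auto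
      also have "emeasure QQ UNIV = 1" using pq.emeasure_space_1 by simp
      finally show "emeasure (distr M borel snd) A = emeasure \<nu> A" by simp
    qed
    finally show "distr \<pi> borel snd = \<nu>" .
  qed
  then show ?thesis by auto
qed


lemma coupling_bound:
  assumes nu: "\<nu> \<in> probs" and pi: "\<pi> \<in> couplings (muS S) \<nu>"
  shows "(\<Sum>i<kk. max 0 (1/real kk - measure \<nu> (UB (cc S i)))) * (32*\<epsilon>)
           \<le> integral\<^sup>L \<pi> (\<lambda>p. dn f n (fst p) (snd p))"
proof -
  have P: "prob_space \<pi>" and s\<pi>: "sets \<pi> = sets borel" and m1: "distr \<pi> borel fst = muS S"
    and m2: "distr \<pi> borel snd = \<nu>" using pi unfolding couplings_def by auto
  interpret prob_space \<pi> by (rule P)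
  have sp: "space \<pi> = UNIV" using sets_eq_imp_space_eq[OF s\<pi>] by simp
  have fb: "fst \<in> \<pi> \<rightarrow>\<^sub>M (borel :: 'a measure)"
    by (subst measurable_cong_sets[OF s\<pi> refl]) (intro borel_measurable_continuous_onI continuous_intros)
  have sb: "snd \<in> \<pi> \<rightarrow>\<^sub>M (borel :: 'a measure)"
    by (subst measurable_cong_sets[OF s\<pi> refl]) (intro borel_measurable_continuous_onI continuous_intros)
  define A where "A i = {cc S i} \<times> (UNIV - UB (cc S i))" for i
  have UBc: "closed (UNIV - UB z)" for z
  proof -
    have "open (UB z)" unfolding UB_def by (intro open_Collect_less cont_dn2 continuous_on_const)
    then show ?thesis by (simp add: closed_Diff)
  qed
  have A_sets: "A i \<in> events" for i
    unfolding A_def s\<pi> by (intro borel_closed closed_Times UBc) simp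
  have disj: "disjoint_family_on A {..<kk}"
    unfolding disjoint_family_on_def A_def using cc_eq by auto
  have fin: "finite {..<kk}" by simp
  have mU: "prob (\<Union>i\<in>{..<kk}. A i) = (\<Sum>i<kk. prob (A i))"
    using A_sets disj by (intro finite_measure_finite_Union) auto
  have Uev: "(\<Union>i\<in>{..<kk}. A i) \<in> events" using A_sets by auto
  have each: "max 0 (1/real kk - measure \<nu> (UB (cc S i))) \<le> prob (A i)" if i: "i < kk" for i
  proof -
    define c where "c = cc S i"
    have e1: "fst -` {c} \<inter> space \<pi> = {c} \<times> UNIV" using sp by auto
    have "prob ({c} \<times> UNIV) = measure (distr \<pi> borel fst) {c}"
      using measure_distr[OF fb singleton_sets, of c] e1 by simp
    also have "\<dots> = 1/real kk" using m1 muS_point[OF i] c_def by simp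
    finally have a: "prob ({c} \<times> UNIV) = 1/real kk" .
    have e2: "snd -` UB c \<inter> space \<pi> = UNIV \<times> UB c" using sp by auto
    have "prob (UNIV \<times> UB c) = measure (distr \<pi> borel snd) (UB c)"
      using measure_distr[OF sb UB_sets, of c] e2 by simp
    also have "\<dots> = measure \<nu> (UB c)" using m2 by simp
    finally have b: "prob (UNIV \<times> UB c) = measure \<nu> (UB c)" .
    have cU: "{c} \<times> UB c \<in> events"
    proof -
      have "{c} \<times> UB c = ({c} \<times> UNIV) \<inter> (UNIV \<times> UB c)" by auto
      moreover have "({c} \<times> UNIV) \<in> sets (borel :: ('a \<times> 'a) measure)"
        by (intro borel_closed closed_Times) auto
      moreover have "open (UB c)" unfolding UB_def by (intro open_Collect_less cont_dn2 continuous_on_const)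
      then have "(UNIV \<times> UB c) \<in> sets (borel :: ('a \<times> 'a) measure)"
        by (intro borel_open open_Times) auto
      ultimately show ?thesis unfolding s\<pi> by simp
    qed
    have UBo: "UNIV \<times> UB c \<in> events"
    proof -
      have "open (UB c)" unfolding UB_def by (intro open_Collect_less cont_dn2 continuous_on_const)
      then have "(UNIV \<times> UB c) \<in> sets (borel :: ('a \<times> 'a) measure)"
        by (intro borel_open open_Times) auto
      then show ?thesis unfolding s\<pi> .
    qed
    have "prob ({c} \<times> UB c) \<le> prob (UNIV \<times> UB c)"
      using UBo by (intro finite_measure_mono) auto
    moreover have "prob ({c} \<times> UNIV) \<le> prob (A i) + prob ({c} \<times> UB c)"
    proof -
      have "{c} \<times> UNIV = A i \<union> ({c} \<times> UB c)" unfolding A_def c_def by auto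
      then show ?thesis using measure_Un_le[OF A_sets cU] by simp
    qed
    ultimately have "1/real kk - measure \<nu> (UB c) \<le> prob (A i)" using a b by linarith
    then show ?thesis unfolding c_def by simp
  qed
  have "(\<Sum>i<kk. max 0 (1/real kk - measure \<nu> (UB (cc S i)))) \<le> (\<Sum>i<kk. prob (A i))"
    by (intro sum_mono each) simp
  also have "\<dots> = prob (\<Union>i\<in>{..<kk}. A i)" using mU by simp
  finally have T: "(\<Sum>i<kk. max 0 (1/real kk - measure \<nu> (UB (cc S i)))) \<le> prob (\<Union>i\<in>{..<kk}. A i)" .
  have "prob (\<Union>i\<in>{..<kk}. A i) * (32*\<epsilon>) = integral\<^sup>L \<pi> (\<lambda>p. 32*\<epsilon> * indicator (\<Union>i\<in>{..<kk}. A i) p)"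
    using Uev by (simp add: sp)
  also have "\<dots> \<le> integral\<^sup>L \<pi> (\<lambda>p. dn f n (fst p) (snd p))"
  proof (rule integral_mono)
    show "integrable \<pi> (\<lambda>p. 32*\<epsilon> * indicator (\<Union>i\<in>{..<kk}. A i) p)"
      using Uev by (intro integrable_mult_right integrable_real_indicator) (auto simp: emeasure_eq_measure)
    have m: "(\<lambda>p. dn f n (fst p) (snd p)) \<in> borel_measurable \<pi>"
      by (subst measurable_cong_sets[OF s\<pi> refl]) (rule dn_pair_meas)
    show "integrable \<pi> (\<lambda>p. dn f n (fst p) (snd p))"
    proof (rule integrable_const_bound[where B=D])
      show "AE p in \<pi>. norm (dn f n (fst p) (snd p)) \<le> D"
      proof (intro AE_I2)
        fix p :: "'a \<times> 'a"
        show "norm (dn f n (fst p) (snd p)) \<le> D"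
          using dn_le_D[OF n0, of "fst p" "snd p"] dn_nonneg[OF n0, of f "fst p" "snd p"] by simp
      qed
    qed (rule m)
    fix p :: "'a \<times> 'a"
    show "32*\<epsilon> * indicator (\<Union>i\<in>{..<kk}. A i) p \<le> dn f n (fst p) (snd p)"
    proof (cases "p \<in> (\<Union>i\<in>{..<kk}. A i)")
      case True
      then obtain i where "p \<in> A i" by auto
      then have "\<not> dn f n (fst p) (snd p) < 32*\<epsilon>" unfolding A_def UB_def by auto
      then show ?thesis using True by simp
    next
      case False
      then show ?thesis using dn_nonneg[OF n0] by simp
    qed
  qed
  finally have I: "prob (\<Union>i\<in>{..<kk}. A i) * (32*\<epsilon>) \<le> integral\<^sup>L \<pi> (\<lambda>p. dn f n (fst p) (snd p))" .
  have "(\<Sum>i<kk. max 0 (1/real kk - measure \<nu> (UB (cc S i)))) * (32*\<epsilon>) \<le> prob (\<Union>i\<in>{..<kk}. A i) * (32*\<epsilon>)"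
    using T e0 by (intro mult_right_mono) auto
  then show ?thesis using I by linarith
qed

lemma keyA:
  assumes nu: "\<nu> \<in> probs" and W: "W1n f n (muS S) \<nu> \<le> \<epsilon>"
  shows "(\<Sum>i<kk. max 0 (1/real kk - measure \<nu> (UB (cc S i)))) \<le> 1/32"
proof (rule field_le_epsilon)
  fix d :: real assume d: "0 < d"
  define X where "X = {integral\<^sup>L \<pi> (\<lambda>p. dn f n (fst p) (snd p)) | \<pi>. \<pi> \<in> couplings (muS S) \<nu>}"
  have Xne: "X \<noteq> {}" unfolding X_def using coupling_exists[OF nu] by auto
  have Xb: "bdd_below X" unfolding X_def
    by (rule bdd_belowI[of _ 0]) (use dn_nonneg[OF n0] in \<open>auto intro!: Bochner_Integration.integral_nonneg\<close>)
  have "0 < 32*\<epsilon>*d" using d e0 by simp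
  then have "Inf X < \<epsilon> + 32*\<epsilon>*d" using W unfolding W1n_def X_def by linarith
  then obtain x where "x \<in> X" "x < \<epsilon> + 32*\<epsilon>*d" using cInf_less_iff[OF Xne Xb] by auto
  then obtain \<pi> where pi: "\<pi> \<in> couplings (muS S) \<nu>" "integral\<^sup>L \<pi> (\<lambda>p. dn f n (fst p) (snd p)) < \<epsilon> + 32*\<epsilon>*d"
    unfolding X_def by auto
  have "(\<Sum>i<kk. max 0 (1/real kk - measure \<nu> (UB (cc S i)))) * (32*\<epsilon>) < (1/32 + d) * (32*\<epsilon>)"
    using coupling_bound[OF nu pi(1)] pi(2) by (simp add: algebra_simps)
  then show "(\<Sum>i<kk. max 0 (1/real kk - measure \<nu> (UB (cc S i)))) \<le> 1/32 + d"
    using e0 by (simp add: mult_less_cancel_right)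
qed


lemma finF: "finite F" using sepF unfolding separated_def by auto

lemma UB_sum:
  assumes nu: "\<nu> \<in> probs" and Z: "Z \<subseteq> F"
  shows "(\<Sum>z\<in>Z. measure \<nu> (UB z)) \<le> 1"
proof -
  interpret prob_space \<nu> using nu unfolding probs_def by auto
  have s\<nu>: "sets \<nu> = sets borel" using nu unfolding probs_def by auto
  have fZ: "finite Z" using finite_subset[OF Z finF] .
  have "(\<Sum>z\<in>Z. measure \<nu> (UB z)) = prob (\<Union>z\<in>Z. UB z)"
  proof (rule finite_measure_finite_Union[symmetric])
    show "finite Z" by (rule fZ)
    show "UB ` Z \<subseteq> events" using UB_sets s\<nu> by auto
    show "disjoint_family_on UB Z" unfolding disjoint_family_on_def using UB_disj Z by blast
  qed
  also have "\<dots> \<le> 1" by simp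
  finally show ?thesis .
qed

lemma keyC:
  assumes nu: "\<nu> \<in> probs" and S: "S \<subseteq> {..<kk}" and T: "T \<subseteq> {..<kk}"
    and WS: "W1n f n (muS S) \<nu> \<le> \<epsilon>" and WT: "W1n f n (muS T) \<nu> \<le> \<epsilon>"
  shows "16 * card ((S - T) \<union> (T - S)) \<le> kk"
proof -
  define \<Delta> where "\<Delta> = (S - T) \<union> (T - S)"
  have \<Delta>: "\<Delta> \<subseteq> {..<kk}" using S T unfolding \<Delta>_def by auto
  have f\<Delta>: "finite \<Delta>" using finite_subset[OF \<Delta>] by simp
  define t where "t z = max 0 (1/real kk - measure \<nu> (UB z))" for z
  define ZS where "ZS = cc S ` {..<kk}"
  define ZT where "ZT = cc T ` \<Delta>"
  have disj: "ZS \<inter> ZT = {}"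
  proof (rule ccontr)
    assume "ZS \<inter> ZT \<noteq> {}"
    then obtain i j where ij: "i < kk" "j \<in> \<Delta>" "cc S i = cc T j" unfolding ZS_def ZT_def by auto
    then have "i = j \<and> (i \<in> S \<longleftrightarrow> i \<in> T)" using cc_eq[of i j S T] \<Delta> by auto
    then show False using ij(2) unfolding \<Delta>_def by auto
  qed
  have fZS: "finite ZS" "finite ZT" unfolding ZS_def ZT_def using f\<Delta> by auto
  have cZS: "card ZS = kk" unfolding ZS_def using card_image[OF cc_inj] by simp
  have cZT: "card ZT = card \<Delta>" unfolding ZT_def using card_image[OF inj_on_subset[OF cc_inj \<Delta>]] by simp
  have ZF: "ZS \<union> ZT \<subseteq> F" unfolding ZS_def ZT_def using cc_F \<Delta> by auto
  have t0: "0 \<le> t z" for z unfolding t_def by simp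
  have sS: "(\<Sum>z\<in>ZS. t z) \<le> 1/32"
  proof -
    have "(\<Sum>z\<in>ZS. t z) = (\<Sum>i<kk. t (cc S i))" unfolding ZS_def by (rule sum.reindex_cong[OF cc_inj refl]) simp
    also have "\<dots> \<le> 1/32" unfolding t_def by (rule keyA[OF nu WS])
    finally show ?thesis .
  qed
  have sT: "(\<Sum>z\<in>ZT. t z) \<le> 1/32"
  proof -
    have "(\<Sum>z\<in>ZT. t z) \<le> (\<Sum>z\<in>cc T ` {..<kk}. t z)"
      unfolding ZT_def using \<Delta> t0 by (intro sum_mono2) auto
    also have "\<dots> = (\<Sum>i<kk. t (cc T i))" by (rule sum.reindex_cong[OF cc_inj refl]) simp
    also have "\<dots> \<le> 1/32" unfolding t_def by (rule keyA[OF nu WT])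
    finally show ?thesis .
  qed
  have "(\<Sum>z\<in>ZS \<union> ZT. 1/real kk - measure \<nu> (UB z)) \<le> (\<Sum>z\<in>ZS \<union> ZT. t z)"
    unfolding t_def by (intro sum_mono) simp
  also have "\<dots> = (\<Sum>z\<in>ZS. t z) + (\<Sum>z\<in>ZT. t z)" using fZS disj by (intro sum.union_disjoint) auto
  also have "\<dots> \<le> 1/16" using sS sT by simp
  finally have A: "(\<Sum>z\<in>ZS \<union> ZT. 1/real kk - measure \<nu> (UB z)) \<le> 1/16" .
  have "(\<Sum>z\<in>ZS \<union> ZT. 1/real kk - measure \<nu> (UB z)) = real (card (ZS \<union> ZT)) / real kk - (\<Sum>z\<in>ZS \<union> ZT. measure \<nu> (UB z))"
    by (simp add: sum_subtractf)
  also have "card (ZS \<union> ZT) = kk + card \<Delta>" using card_Un_disjoint[OF fZS disj] cZS cZT by simp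
  finally have B: "(\<Sum>z\<in>ZS \<union> ZT. 1/real kk - measure \<nu> (UB z)) = real (kk + card \<Delta>) / real kk - (\<Sum>z\<in>ZS \<union> ZT. measure \<nu> (UB z))" .
  have C: "(\<Sum>z\<in>ZS \<union> ZT. measure \<nu> (UB z)) \<le> 1" by (rule UB_sum[OF nu ZF])
  have K: "0 < real kk" using kk1 by simp
  have "real (kk + card \<Delta>) / real kk = 1 + real (card \<Delta>) / real kk" using K by (simp add: field_simps)
  then have "real (card \<Delta>) / real kk \<le> 1/16" using A B C by linarith
  then have "16 * real (card \<Delta>) \<le> real kk" using K by (simp add: field_simps)
  then show ?thesis unfolding \<Delta>_def by linarith
qed

lemma counting:
  assumes fin: "finite E'" and sub: "E' \<subseteq> probs" and cov: "\<forall>\<mu>\<in>probs. \<exists>\<nu>\<in>E'. W1n f n \<mu> \<nu> \<le> \<epsilon>"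
  shows "2 ^ kk \<le> card E' * card {A. A \<subseteq> {..<kk} \<and> 16 * card A \<le> kk}"
proof -
  define V where "V = {A. A \<subseteq> {..<kk} \<and> 16 * card A \<le> kk}"
  have fV: "finite V" unfolding V_def by (rule finite_subset[of _ "Pow {..<kk}"]) auto
  define \<phi> where "\<phi> S = (SOME \<nu>. \<nu> \<in> E' \<and> W1n f n (muS S) \<nu> \<le> \<epsilon>)" for S
  have \<phi>: "\<phi> S \<in> E' \<and> W1n f n (muS S) (\<phi> S) \<le> \<epsilon>" for S
    unfolding \<phi>_def by (rule someI_ex) (use cov muS_probs in blast)
  define fib where "fib \<nu> = {S \<in> Pow {..<kk}. \<phi> S = \<nu>}" for \<nu>
  have fibV: "card (fib \<nu>) \<le> card V" if "\<nu> \<in> E'" for \<nu>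
  proof (cases "fib \<nu> = {}")
    case True then show ?thesis by simp
  next
    case False
    then obtain S0 where S0: "S0 \<in> fib \<nu>" by auto
    define g where "g T = (S0 - T) \<union> (T - S0)" for T :: "nat set"
    have "inj_on g (fib \<nu>)"
    proof (rule inj_onI)
      fix T1 T2 assume "g T1 = g T2"
      then show "T1 = T2" unfolding g_def by blast
    qed
    moreover have "g ` fib \<nu> \<subseteq> V"
    proof
      fix A assume "A \<in> g ` fib \<nu>"
      then obtain T where T: "T \<in> fib \<nu>" "A = g T" by auto
      have nu: "\<nu> \<in> probs" using that sub by auto
      have "16 * card A \<le> kk" unfolding T(2) g_def
        using keyC[OF nu, of S0 T] S0 T(1) \<phi>[of S0] \<phi>[of T] unfolding fib_def by auto
      moreover have "A \<subseteq> {..<kk}" using S0 T unfolding fib_def g_def by auto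
      ultimately show "A \<in> V" unfolding V_def by auto
    qed
    ultimately show ?thesis using fV by (intro card_inj_on_le) auto
  qed
  have "Pow {..<kk} \<subseteq> (\<Union>\<nu>\<in>E'. fib \<nu>)" unfolding fib_def using \<phi> by auto
  then have "card (Pow {..<kk}) \<le> card (\<Union>\<nu>\<in>E'. fib \<nu>)"
    using fin by (intro card_mono) (auto simp: fib_def)
  also have "\<dots> \<le> (\<Sum>\<nu>\<in>E'. card (fib \<nu>))" by (rule card_UN_le[OF fin])
  also have "\<dots> \<le> (\<Sum>\<nu>\<in>E'. card V)" by (intro sum_mono fibV)
  also have "\<dots> = card E' * card V" by simp
  finally show ?thesis unfolding V_def by (simp add: card_Pow)
qed

end
end


lemma liminf_loglog:
  fixes a :: "nat \<Rightarrow> real" and c :: real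
  assumes a0: "\<And>n. 0 \<le> a n" and c: "1 \<le> c"
  shows "liminf (\<lambda>n. ereal ((a n + ln (c + a n)) / real n)) \<le> liminf (\<lambda>n. ereal (a n / real n))"
proof (rule ccontr)
  define A where "A n = ereal (a n / real n)" for n
  define B where "B n = ereal ((a n + ln (c + a n)) / real n)" for n
  assume "\<not> liminf (\<lambda>n. ereal ((a n + ln (c + a n)) / real n)) \<le> liminf (\<lambda>n. ereal (a n / real n))"
  then have lt: "liminf A < liminf B" unfolding A_def[abs_def] B_def[abs_def] by simp
  obtain B0 :: real where B0: "liminf A < ereal B0" "ereal B0 < liminf B" using ereal_dense2[OF lt] by auto
  have evB: "eventually (\<lambda>n. ereal B0 < B n) sequentially"
    using le_Liminf_iff[of "liminf B" sequentially B] B0(2) by auto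
  have "\<not> ereal B0 \<le> liminf A" using B0(1) by simp
  then obtain y where y: "y < ereal B0" "\<not> eventually (\<lambda>n. y < A n) sequentially"
    using le_Liminf_iff[of "ereal B0" sequentially A] by auto
  have "\<exists>z::real. y < ereal z \<and> ereal z < ereal B0"
  proof (cases "y = -\<infinity>")
    case True then show ?thesis by (intro exI[of _ "B0 - 1"]) auto
  next
    case False then show ?thesis using ereal_dense2[OF y(1)] by auto
  qed
  then obtain z :: real where z: "y < ereal z" "z < B0" by auto
  have frA: "frequently (\<lambda>n. a n / real n < z) sequentially"
  proof -
    have "frequently (\<lambda>n. \<not> y < A n) sequentially" using y(2) by (simp add: not_eventually)
    then show ?thesis
    proof (rule frequently_elim1)
      fix n assume "\<not> y < A n"
      then have "A n < ereal z" using z(1) by (meson le_less_trans not_less)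
      then show "a n / real n < z" unfolding A_def by simp
    qed
  qed
  have z0: "0 < z"
  proof -
    obtain n where "a n / real n < z" using frequently_ex[OF frA] by auto
    moreover have "0 \<le> a n / real n" using a0[of n] by simp
    ultimately show ?thesis by linarith
  qed
  have lim: "(\<lambda>n::nat. ln (c + z * real n) / real n) \<longlonglongrightarrow> 0" using c z0 by real_asymp
  have ev2: "eventually (\<lambda>n. ln (c + z * real n) / real n < B0 - z) sequentially"
    using order_tendstoD(2)[OF lim, of "B0 - z"] z(2) by simp
  have ev3: "eventually (\<lambda>n. 0 < n) sequentially" by (rule eventually_gt_at_top)
  have "frequently (\<lambda>n. a n / real n < z \<and> (ln (c + z * real n) / real n < B0 - z \<and> 0 < n \<and> ereal B0 < B n)) sequentially"
    using frequently_eventually_frequently[OF frA eventually_conj[OF ev2 eventually_conj[OF ev3 evB]]] .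
  then obtain n where n: "a n / real n < z" "ln (c + z * real n) / real n < B0 - z" "0 < n" "ereal B0 < B n"
    using frequently_ex by blast
  have np: "0 < real n" using n(3) by simp
  have "a n < z * real n" using n(1) np by (simp add: field_simps)
  then have "ln (c + a n) \<le> ln (c + z * real n)" using a0[of n] c by (subst ln_le_cancel_iff) auto
  then have "ln (c + a n) / real n \<le> ln (c + z * real n) / real n" using np by (intro divide_right_mono) auto
  then have "(a n + ln (c + a n)) / real n < B0" using n(1,2) by (simp add: add_divide_distrib)
  then show False using n(4) unfolding B_def by simp
qed


lemma ln_nat_nonneg: "0 \<le> ln (real (m::nat))"
  by (cases m) auto

lemma Vbound: "real (card {A. A \<subseteq> {..<k} \<and> 16 * card A \<le> k}) \<le> (17/16)^k * 16^(k div 16)"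
proof -
  define r where "r = k div 16"
  have eq: "{A. A \<subseteq> {..<k} \<and> 16 * card A \<le> k} = (\<Union>j\<in>{..r}. {A. A \<subseteq> {..<k} \<and> card A = j})"
    unfolding r_def by auto
  have "card {A. A \<subseteq> {..<k} \<and> 16 * card A \<le> k} \<le> (\<Sum>j\<le>r. card {A. A \<subseteq> {..<k} \<and> card A = j})"
    unfolding eq by (rule card_UN_le) simp
  also have "\<dots> = (\<Sum>j\<le>r. k choose j)" by (intro sum.cong refl) (simp add: n_subsets)
  finally have c: "real (card {A. A \<subseteq> {..<k} \<and> 16 * card A \<le> k}) \<le> (\<Sum>j\<le>r. real (k choose j))"
    by (simp flip: of_nat_sum)
  also have "\<dots> \<le> (\<Sum>j\<le>r. real (k choose j) * (1/16)^j * 16^r)"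
  proof (intro sum_mono)
    fix j assume "j \<in> {..r}"
    then have jr: "j \<le> r" by simp
    have "(16::real)^r = 16^j * 16^(r - j)" using jr by (simp flip: power_add)
    then have "(1/16::real)^j * 16^r = 16^(r-j)" by (simp add: power_one_over)
    also have "\<dots> \<ge> 1" by simp
    finally show "real (k choose j) \<le> real (k choose j) * (1/16)^j * 16^r"
      by (simp add: mult.assoc mult_le_cancel_left1)
  qed
  also have "\<dots> \<le> (\<Sum>j\<le>k. real (k choose j) * (1/16)^j * 16^r)"
    by (intro sum_mono2) (auto simp: r_def)
  also have "\<dots> = 16^r * (\<Sum>j\<le>k. real (k choose j) * (1/16)^j * 1^(k - j))"
    by (simp add: sum_distrib_left mult_ac)
  also have "(\<Sum>j\<le>k. real (k choose j) * (1/16)^j * 1^(k - j)) = (1/16 + 1)^k"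
    by (rule binomial_ring[symmetric])
  finally show ?thesis unfolding r_def by (simp add: mult.commute)
qed

lemma exp4: "(10::real) \<le> exp 4"
proof -
  have "2 \<le> exp (1::real)" using exp_ge_add_one_self[of 1] by simp
  then have "(2::real)^4 \<le> exp 1 ^ 4" by (intro power_mono) auto
  also have "exp (1::real) ^ 4 = exp 4" by (simp flip: exp_of_nat_mult)
  finally show ?thesis by simp
qed

lemma ln10: "ln (10::real) \<le> 4"
  using exp4 by (metis exp_le_cancel_iff exp_ln zero_less_numeral)

lemma lnln_ge: "-4 \<le> ln (ln (real (N::nat)))"
proof (cases "N \<le> 1")
  case True
  then have "N = 0 \<or> N = 1" by auto
  then show ?thesis by auto
next
  case False
  then have N2: "2 \<le> real N" by auto
  have "ln 2 \<le> ln (real N)" using N2 by (subst ln_le_cancel_iff) auto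
  then have l: "2/3 \<le> ln (real N)" using ln2_ge_two_thirds by linarith
  have "exp (-4) = inverse (exp (4::real))" by (simp add: exp_minus)
  also have "\<dots> \<le> inverse 10" using exp4 by (intro le_imp_inverse_le) auto
  finally have "exp (-4) \<le> (1/10::real)" by (simp add: inverse_eq_divide)
  then have "exp (-4) \<le> ln (real N)" using l by linarith
  then have "ln (exp (-4)) \<le> ln (ln (real N))" using l by (subst ln_le_cancel_iff) auto
  then show ?thesis by simp
qed

lemma lnln_lower_gen:
  fixes m N :: nat
  assumes "1 \<le> m" and H: "2 \<le> m \<Longrightarrow> real m / 10 \<le> ln (real N)"
  shows "ln (real m) - 4 \<le> ln (ln (real N))"
proof (cases "m = 1")
  case True then show ?thesis using lnln_ge[of N] by simp
next
  case False
  then have m2: "2 \<le> m" using assms by auto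
  have p: "0 < real m / 10" using m2 by simp
  then have "ln (real m / 10) \<le> ln (ln (real N))" using H[OF m2] by (subst ln_le_cancel_iff) auto
  moreover have "ln (real m / 10) = ln (real m) - ln 10" using m2 by (simp add: ln_div)
  ultimately show ?thesis using ln10 by linarith
qed

context cds begin

lemma NM_obtain:
  assumes "0 < n" "0 < \<epsilon>"
  obtains E' where "finite E'" "E' \<subseteq> probs" "\<forall>\<mu>\<in>probs. \<exists>\<nu>\<in>E'. W1n f n \<mu> \<nu> \<le> \<epsilon>" "card E' = NM f n \<epsilon>"
proof -
  have "{card E' | E'. finite E' \<and> E' \<subseteq> probs \<and> (\<forall>\<mu>\<in>probs. \<exists>\<nu>\<in>E'. W1n f n \<mu> \<nu> \<le> \<epsilon>)} \<noteq> {}"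
    using NM_upper_gen(2)[OF assms] by auto
  from Inf_nat_def1[OF this] show ?thesis using that unfolding NM_def by auto
qed

lemma NM_lower_ln:
  assumes n0: "0 < n" and e0: "0 < \<epsilon>" and sepF: "separated n (64*\<epsilon>) F"
    and hb: "bij_betw h {..<card F} F" and m2: "2 \<le> card F"
  shows "real (card F) / 10 \<le> ln (real (NM f n \<epsilon>))"
proof -
  obtain E' where E': "finite E'" "E' \<subseteq> probs" "\<forall>\<mu>\<in>probs. \<exists>\<nu>\<in>E'. W1n f n \<mu> \<nu> \<le> \<epsilon>" "card E' = NM f n \<epsilon>"
    using NM_obtain[OF n0 e0] by metis
  define k where "k = kk F"
  have k1: "1 \<le> k" unfolding k_def using kk1[OF n0 e0 sepF hb m2] .
  have cnt: "2 ^ k \<le> NM f n \<epsilon> * card {A. A \<subseteq> {..<k} \<and> 16 * card A \<le> k}"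
    using counting[OF n0 e0 sepF hb m2 E'(1,2,3)] E'(4) unfolding k_def by simp
  have "(2::real) ^ k \<le> real (NM f n \<epsilon>) * real (card {A. A \<subseteq> {..<k} \<and> 16 * card A \<le> k})"
    using cnt by (metis of_nat_le_iff of_nat_mult of_nat_numeral of_nat_power)
  also have "\<dots> \<le> real (NM f n \<epsilon>) * ((17/16)^k * 16^(k div 16))"
    by (intro mult_left_mono Vbound) auto
  finally have ineq: "(2::real) ^ k \<le> real (NM f n \<epsilon>) * ((17/16)^k * 16^(k div 16))" .
  have NMpos: "0 < real (NM f n \<epsilon>)"
  proof (rule ccontr)
    assume "\<not> 0 < real (NM f n \<epsilon>)"
    then have "real (NM f n \<epsilon>) = 0" by simp
    then have "(2::real) ^ k \<le> 0" using ineq by simp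
    moreover have "(0::real) < 2 ^ k" by simp
    ultimately show False by linarith
  qed
  have "ln ((2::real) ^ k) \<le> ln (real (NM f n \<epsilon>) * ((17/16)^k * 16^(k div 16)))"
    using ineq NMpos by (subst ln_le_cancel_iff) auto
  then have "real k * ln 2 \<le> ln (real (NM f n \<epsilon>)) + (real k * ln (17/16) + real (k div 16) * ln 16)"
    using NMpos by (simp add: ln_mult_pos ln_realpow)
  moreover have "ln (17/16::real) \<le> 1/16"
    using ln_add_one_self_le_self[of "1/16::real"] by simp
  moreover have "real (k div 16) * ln 16 \<le> real k * ln 2 / 4"
  proof -
    have "ln (16::real) = 4 * ln 2" using ln_realpow[of 2 4] by simp
    moreover have "real (k div 16) \<le> real k / 16"
    proof -
      have "16 * (k div 16) \<le> k" by simp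
      then have "real (16 * (k div 16)) \<le> real k" by (simp only: of_nat_le_iff)
      then show ?thesis by simp
    qed
    moreover have l2: "0 \<le> ln (2::real)" by simp
    ultimately have "real (k div 16) * (4 * ln 2) \<le> (real k / 16) * (4 * ln 2)"
      by (intro mult_right_mono) auto
    then have "real (k div 16) * ln 16 \<le> (real k / 16) * (4 * ln 2)"
      using \<open>ln (16::real) = 4 * ln 2\<close> by simp
    then show ?thesis by simp
  qed
  moreover have "real k * ln (17/16) \<le> real k * (1/16)"
    using \<open>ln (17/16::real) \<le> 1/16\<close> by (intro mult_left_mono) auto
  ultimately have "real k * ln 2 * (3/4) - real k / 16 \<le> ln (real (NM f n \<epsilon>))"
    by linarith
  moreover have "real k * (2/3) * (3/4) \<le> real k * ln 2 * (3/4)"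
    using ln2_ge_two_thirds by (intro mult_right_mono mult_left_mono) auto
  ultimately have "real k * (7/16) \<le> ln (real (NM f n \<epsilon>))" by linarith
  moreover have "real (card F) / 10 \<le> real k * (7/16)"
  proof -
    have "card F \<le> 4 * k" unfolding k_def kk_def[OF n0 e0 sepF hb m2] using m2 by presburger
    then have "real (card F) \<le> 4 * real k" by simp
    then show ?thesis by simp
  qed
  ultimately show ?thesis by linarith
qed

end


context cds begin

lemma NM_lower_bound:
  assumes n0: "0 < n" and e0: "0 < \<epsilon>"
  shows "ln (real (span_num f n (64*\<epsilon>))) + (-4) \<le> ln (ln (real (NM f n \<epsilon>)))"
proof -
  have r0: "0 < 64*\<epsilon>" using e0 by simp
  obtain F where F: "separated n (64*\<epsilon>) F" "span_num f n (64*\<epsilon>) \<le> card F"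
    using sep_exists[OF n0 r0] by auto
  have s1: "1 \<le> span_num f n (64*\<epsilon>)" using span_pos[OF n0 r0] .
  have finF: "finite F" using F(1) unfolding separated_def by auto
  obtain h where h: "bij_betw h {0..<card F} F" using ex_bij_betw_nat_finite[OF finF] by blast
  then have h': "bij_betw h {..<card F} F" by (simp add: lessThan_atLeast0)
  have "ln (real (card F)) - 4 \<le> ln (ln (real (NM f n \<epsilon>)))"
  proof (rule lnln_lower_gen)
    show "1 \<le> card F" using s1 F(2) by simp
    assume "2 \<le> card F"
    then show "real (card F) / 10 \<le> ln (real (NM f n \<epsilon>))" by (rule NM_lower_ln[OF n0 e0 F(1) h'])
  qed
  moreover have "ln (real (span_num f n (64*\<epsilon>))) \<le> ln (real (card F))"
    using s1 F(2) by (subst ln_le_cancel_iff) auto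
  ultimately show ?thesis by linarith
qed

definition cM :: "real \<Rightarrow> real" where "cM \<epsilon> = ln (2 * D / \<epsilon> + 3) + 1"

lemma cM_ge: "0 < \<epsilon> \<Longrightarrow> 1 \<le> cM \<epsilon>"
  unfolding cM_def using D_nonneg by simp

lemma NM_upper_bound:
  assumes n0: "0 < n" and e0: "0 < \<epsilon>"
  shows "ln (ln (real (NM f n \<epsilon>))) \<le> ln (real (span_num f n (\<epsilon>/2))) + ln (cM \<epsilon> + ln (real (span_num f n (\<epsilon>/2))))"
proof -
  define s where "s = span_num f n (\<epsilon>/2)"
  have s1: "1 \<le> s" unfolding s_def using span_pos[OF n0] e0 by simp
  obtain K :: nat where K: "real K \<le> 2 * D * real s / \<epsilon> + 2" "NM f n \<epsilon> \<le> (K + 1) ^ s"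
    using NM_upper_gen(1)[OF n0 e0] unfolding s_def by blast
  define C where "C = 2 * D / \<epsilon> + 3"
  have C3: "3 \<le> C" unfolding C_def using D_nonneg e0 by simp
  have cC: "cM \<epsilon> = ln C + 1" unfolding cM_def C_def ..
  have lns: "0 \<le> ln (real s)" using s1 by simp
  have c1: "1 \<le> cM \<epsilon> + ln (real s)" using cM_ge[OF e0] lns by linarith
  show ?thesis
  proof (cases "NM f n \<epsilon> \<le> 1")
    case True
    then have "NM f n \<epsilon> = 0 \<or> NM f n \<epsilon> = 1" by auto
    then have "ln (ln (real (NM f n \<epsilon>))) = 0" by auto
    moreover have "0 \<le> ln (cM \<epsilon> + ln (real s))" using c1 by simp
    ultimately show ?thesis using lns unfolding s_def by linarith
  next
    case False
    then have N2: "2 \<le> real (NM f n \<epsilon>)" by simp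
    have "real (K + 1) \<le> C * real s"
    proof -
      have "real (K + 1) \<le> 2 * D * real s / \<epsilon> + 3" using K(1) by simp
      also have "\<dots> = (2 * D / \<epsilon>) * real s + 3" by simp
      also have "\<dots> \<le> (2 * D / \<epsilon>) * real s + 3 * real s" using s1 by simp
      also have "\<dots> = C * real s" unfolding C_def by (simp add: algebra_simps)
      finally show ?thesis .
    qed
    have "real (NM f n \<epsilon>) \<le> real (K + 1) ^ s" using K(2) by (metis of_nat_le_iff of_nat_power)
    then have "ln (real (NM f n \<epsilon>)) \<le> ln (real (K + 1) ^ s)" using N2 by (subst ln_le_cancel_iff) auto
    also have "\<dots> = real s * ln (real (K + 1))" by (simp add: ln_realpow)
    also have "\<dots> \<le> real s * ln (C * real s)"
      using \<open>real (K + 1) \<le> C * real s\<close> s1 by (intro mult_left_mono) (auto simp: ln_le_cancel_iff)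
    also have "ln (C * real s) = ln C + ln (real s)" using C3 s1 by (intro ln_mult_pos) auto
    also have "real s * (ln C + ln (real s)) = real s * (cM \<epsilon> + ln (real s) - 1)" using cC by simp
    also have "\<dots> \<le> real s * (cM \<epsilon> + ln (real s))" using s1 by (intro mult_left_mono) auto
    finally have L: "ln (real (NM f n \<epsilon>)) \<le> real s * (cM \<epsilon> + ln (real s))" .
    have p: "0 < ln (real (NM f n \<epsilon>))" using N2 by simp
    have "ln (ln (real (NM f n \<epsilon>))) \<le> ln (real s * (cM \<epsilon> + ln (real s)))"
      using L p by (subst ln_le_cancel_iff) auto
    also have "\<dots> = ln (real s) + ln (cM \<epsilon> + ln (real s))" using s1 c1 by (intro ln_mult_pos) auto
    finally show ?thesis unfolding s_def .
  qed
qed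

lemma NM_tendsto: "((\<lambda>\<epsilon>. liminf (\<lambda>n. ereal (ln (ln (real (NM f n \<epsilon>))) / real n))) \<longlongrightarrow> H) (at_right 0)"
proof (rule squeeze[of 64 "1/2" 1])
  fix \<epsilon> :: real assume e: "0 < \<epsilon>" "\<epsilon> < 1"
  have "ls (64*\<epsilon>) = liminf (\<lambda>n. ereal ((ln (real (span_num f n (64*\<epsilon>))) + (-4)) / real n))"
    unfolding ls_def by (rule liminf_shift[symmetric])
  also have "\<dots> \<le> liminf (\<lambda>n. ereal (ln (ln (real (NM f n \<epsilon>))) / real n))"
    by (intro Liminf_mono eventually_sequentiallyI[of 1]) (use NM_lower_bound e in \<open>auto intro!: divide_right_mono\<close>)
  finally show "ls (64*\<epsilon>) \<le> liminf (\<lambda>n. ereal (ln (ln (real (NM f n \<epsilon>))) / real n))" .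
  have "liminf (\<lambda>n. ereal (ln (ln (real (NM f n \<epsilon>))) / real n))
      \<le> liminf (\<lambda>n. ereal ((ln (real (span_num f n (\<epsilon>/2))) + ln (cM \<epsilon> + ln (real (span_num f n (\<epsilon>/2))))) / real n))"
    by (intro Liminf_mono eventually_sequentiallyI[of 1]) (use NM_upper_bound e in \<open>auto intro!: divide_right_mono\<close>)
  also have "\<dots> \<le> liminf (\<lambda>n. ereal (ln (real (span_num f n (\<epsilon>/2))) / real n))"
    by (rule liminf_loglog) (use cM_ge e ln_nat_nonneg in auto)
  also have "\<dots> = ls (1/2*\<epsilon>)" unfolding ls_def by simp
  finally show "liminf (\<lambda>n. ereal (ln (ln (real (NM f n \<epsilon>))) / real n)) \<le> ls (1/2*\<epsilon>)" .
qed auto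

end

theorem mainTheorem18:
  fixes f :: "'a::metric_space \<Rightarrow> 'a"
  assumes "compact (UNIV :: 'a set)"
    and "continuous_on UNIV f"
  shows "((\<lambda>\<epsilon>::real. liminf (\<lambda>n. ereal (ln (ln (real (NM f n \<epsilon>))) / real n)))
            \<longlongrightarrow> h_top f) (at_right 0) \<and>
         ((\<lambda>\<epsilon>::real. liminf (\<lambda>n. ereal (ln (ln (real (NK f n \<epsilon>))) / real n)))
            \<longlongrightarrow> h_top f) (at_right 0)"
proof -
  interpret cds f using assms by unfold_locales
  show ?thesis using NM_tendsto NK_tendsto htop_eq by simp
qed


end
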